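(* Let $X$ be a space which has a $\sigma$-strongly point-finite (respectively, $\sigma$-boundedly point-finite) family $\mathcal{P}$ of clopen sets such that $\mathcal{P}\cup\{X\setminus U: U\in\mathcal{P}\}$ is a subbase of $X$. Then $X$ can be embedded in a zero-dimensional Eberlein compact (respectively, a zero-dimensional uniform Eberlein compact). In particular, every space having a $\sigma$-strongly point-finite base of clopen sets can be embedded in a zero-dimensional Eberlein compact, and every space having a $\sigma$-boundedly point-finite or a $\sigma$-disjoint base of clopen sets can be embedded in a zero-dimensional uniform Eberlein compact.
   Context: "Space" means topological $T_0$-space. A family of subsets of a set is strongly point-finite if every countably infinite subfamily contains a finite subfamily with empty intersection; it is boundedly point-finite if there is an integer $n$ such that any $n+2$ of its members have empty intersection. $\sigma$-strongly point-finite (resp. $\sigma$-boundedly point-finite) means a countable union of strongly point-finite (resp. boundedly point-finite) families. An Eberlein compact is a compact Hausdorff space homeomorphic to a weakly compact subset of a Banach space; a uniform Eberlein compact is one homeomorphic to a weakly compact subset of a Hilbert space. *)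

theory Defs
  imports "HOL-Analysis.Analysis"
begin

definition strongly_point_finite :: "'a set set \<Rightarrow> bool" where
  "strongly_point_finite \<P> \<longleftrightarrow>
     (\<forall>\<Q>. \<Q> \<subseteq> \<P> \<and> countable \<Q> \<and> infinite \<Q> \<longrightarrow>
        (\<exists>\<F>. \<F> \<subseteq> \<Q> \<and> finite \<F> \<and> \<F> \<noteq> {} \<and> \<Inter>\<F> = {}))"

definition boundedly_point_finite :: "'a set set \<Rightarrow> bool" where
  "boundedly_point_finite \<P> \<longleftrightarrow>
     (\<exists>n::nat. \<forall>\<F>. \<F> \<subseteq> \<P> \<and> finite \<F> \<and> card \<F> = n + 2 \<longrightarrow> \<Inter>\<F> = {})"

definition sigma_strongly_point_finite :: "'a set set \<Rightarrow> bool" where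
  "sigma_strongly_point_finite \<P> \<longleftrightarrow>
     (\<exists>\<P>s :: nat \<Rightarrow> 'a set set. \<P> = (\<Union>n. \<P>s n) \<and> (\<forall>n. strongly_point_finite (\<P>s n)))"

definition sigma_boundedly_point_finite :: "'a set set \<Rightarrow> bool" where
  "sigma_boundedly_point_finite \<P> \<longleftrightarrow>
     (\<exists>\<P>s :: nat \<Rightarrow> 'a set set. \<P> = (\<Union>n. \<P>s n) \<and> (\<forall>n. boundedly_point_finite (\<P>s n)))"

definition sigma_disjoint :: "'a set set \<Rightarrow> bool" where
  "sigma_disjoint \<P> \<longleftrightarrow>
     (\<exists>\<P>s :: nat \<Rightarrow> 'a set set. \<P> = (\<Union>n. \<P>s n) \<and> (\<forall>n. pairwise disjnt (\<P>s n)))"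

definition subbase_of :: "'a set set \<Rightarrow> 'a topology \<Rightarrow> bool" where
  "subbase_of S X \<longleftrightarrow>
     S \<subseteq> Pow (topspace X) \<and>
     openin X = arbitrary union_of (finite intersection_of (\<lambda>U. U \<in> S) relative_to topspace X)"

definition base_of :: "'a set set \<Rightarrow> 'a topology \<Rightarrow> bool" where
  "base_of B X \<longleftrightarrow> (\<forall>U\<in>B. openin X U) \<and> openin X = arbitrary union_of (\<lambda>U. U \<in> B)"

definition clopen_family :: "'a topology \<Rightarrow> 'a set set \<Rightarrow> bool" where
  "clopen_family X \<P> \<longleftrightarrow> (\<forall>U\<in>\<P>. openin X U \<and> closedin X U)"

definition real_vector_space_on ::
  "'v set \<Rightarrow> ('v \<Rightarrow> 'v \<Rightarrow> 'v) \<Rightarrow> (real \<Rightarrow> 'v \<Rightarrow> 'v) \<Rightarrow> 'v \<Rightarrow> bool" where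
  "real_vector_space_on V add smul zero \<longleftrightarrow>
     zero \<in> V \<and>
     (\<forall>x\<in>V. \<forall>y\<in>V. add x y \<in> V) \<and>
     (\<forall>a. \<forall>x\<in>V. smul a x \<in> V) \<and>
     (\<forall>x\<in>V. \<forall>y\<in>V. \<forall>z\<in>V. add (add x y) z = add x (add y z)) \<and>
     (\<forall>x\<in>V. \<forall>y\<in>V. add x y = add y x) \<and>
     (\<forall>x\<in>V. add zero x = x) \<and>
     (\<forall>x\<in>V. \<exists>y\<in>V. add x y = zero) \<and>
     (\<forall>a. \<forall>x\<in>V. \<forall>y\<in>V. smul a (add x y) = add (smul a x) (smul a y)) \<and>
     (\<forall>a b. \<forall>x\<in>V. smul (a + b) x = add (smul a x) (smul b x)) \<and>
     (\<forall>a b. \<forall>x\<in>V. smul a (smul b x) = smul (a * b) x) \<and>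
     (\<forall>x\<in>V. smul 1 x = x)"

definition banach_space_on ::
  "'v set \<Rightarrow> ('v \<Rightarrow> 'v \<Rightarrow> 'v) \<Rightarrow> (real \<Rightarrow> 'v \<Rightarrow> 'v) \<Rightarrow> 'v \<Rightarrow> ('v \<Rightarrow> real) \<Rightarrow> bool" where
  "banach_space_on V add smul zero nrm \<longleftrightarrow>
     real_vector_space_on V add smul zero \<and>
     (\<forall>x\<in>V. nrm x \<ge> 0) \<and>
     (\<forall>x\<in>V. nrm x = 0 \<longleftrightarrow> x = zero) \<and>
     (\<forall>a. \<forall>x\<in>V. nrm (smul a x) = \<bar>a\<bar> * nrm x) \<and>
     (\<forall>x\<in>V. \<forall>y\<in>V. nrm (add x y) \<le> nrm x + nrm y) \<and>
     (\<forall>s :: nat \<Rightarrow> 'v. (\<forall>n. s n \<in> V) \<and>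
        (\<forall>e>0. \<exists>N. \<forall>m\<ge>N. \<forall>n\<ge>N. nrm (add (s m) (smul (-1) (s n))) < e) \<longrightarrow>
        (\<exists>l\<in>V. (\<lambda>n. nrm (add (s n) (smul (-1) l))) \<longlonglongrightarrow> 0))"

definition hilbert_space_on ::
  "'v set \<Rightarrow> ('v \<Rightarrow> 'v \<Rightarrow> 'v) \<Rightarrow> (real \<Rightarrow> 'v \<Rightarrow> 'v) \<Rightarrow> 'v \<Rightarrow> ('v \<Rightarrow> 'v \<Rightarrow> real) \<Rightarrow> bool" where
  "hilbert_space_on V add smul zero inn \<longleftrightarrow>
     (\<forall>x\<in>V. \<forall>y\<in>V. inn x y = inn y x) \<and>
     (\<forall>x\<in>V. \<forall>y\<in>V. \<forall>z\<in>V. inn (add x y) z = inn x z + inn y z) \<and>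
     (\<forall>a. \<forall>x\<in>V. \<forall>y\<in>V. inn (smul a x) y = a * inn x y) \<and>
     (\<forall>x\<in>V. inn x x \<ge> 0) \<and>
     banach_space_on V add smul zero (\<lambda>x. sqrt (inn x x))"

definition bounded_linear_functional_on ::
  "'v set \<Rightarrow> ('v \<Rightarrow> 'v \<Rightarrow> 'v) \<Rightarrow> (real \<Rightarrow> 'v \<Rightarrow> 'v) \<Rightarrow> ('v \<Rightarrow> real) \<Rightarrow> ('v \<Rightarrow> real) \<Rightarrow> bool" where
  "bounded_linear_functional_on V add smul nrm f \<longleftrightarrow>
     (\<forall>x\<in>V. \<forall>y\<in>V. f (add x y) = f x + f y) \<and>
     (\<forall>a. \<forall>x\<in>V. f (smul a x) = a * f x) \<and>
     (\<exists>c. \<forall>x\<in>V. \<bar>f x\<bar> \<le> c * nrm x)"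

definition weak_topology_on ::
  "'v set \<Rightarrow> ('v \<Rightarrow> 'v \<Rightarrow> 'v) \<Rightarrow> (real \<Rightarrow> 'v \<Rightarrow> 'v) \<Rightarrow> ('v \<Rightarrow> real) \<Rightarrow> 'v topology" where
  "weak_topology_on V add smul nrm =
     subtopology
       (topology_generated_by
          {{x. f x \<in> U} | f U. bounded_linear_functional_on V add smul nrm f \<and> open U})
       V"

text \<open>A compact Hausdorff space homeomorphic to a weakly compact subset of a
  real Banach space (resp. Hilbert space). The Banach space carrier lives in
  the type 'v, given by the first argument.\<close>
definition eberlein_compact :: "'v itself \<Rightarrow> 'b topology \<Rightarrow> bool" where
  "eberlein_compact (_ :: 'v itself) K \<longleftrightarrow>
     compact_space K \<and> Hausdorff_space K \<and>
     (\<exists>(V::'v set) add smul zero nrm C h.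
        banach_space_on V add smul zero nrm \<and> C \<subseteq> V \<and>
        compactin (weak_topology_on V add smul nrm) C \<and>
        homeomorphic_map K (subtopology (weak_topology_on V add smul nrm) C) h)"

definition uniform_eberlein_compact :: "'v itself \<Rightarrow> 'b topology \<Rightarrow> bool" where
  "uniform_eberlein_compact (_ :: 'v itself) K \<longleftrightarrow>
     compact_space K \<and> Hausdorff_space K \<and>
     (\<exists>(V::'v set) add smul zero inn C h.
        hilbert_space_on V add smul zero inn \<and> C \<subseteq> V \<and>
        compactin (weak_topology_on V add smul (\<lambda>x. sqrt (inn x x))) C \<and>
        homeomorphic_map K
          (subtopology (weak_topology_on V add smul (\<lambda>x. sqrt (inn x x))) C) h)"

text \<open>Zero-dimensional: small inductive dimension 0 (equivalently, for
  these spaces, a base of clopen sets).\<close>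

end

theory Submission
  imports Defs
begin

lemma Hausdorff_fun: "Hausdorff_space (euclidean :: ('i \<Rightarrow> real) topology)"
  by (metis Hausdorff_space_euclidean Hausdorff_space_product_topology euclidean_product_topology)

lemma weak_lemma:
  fixes V :: "('i \<Rightarrow> real) set" and N :: "('i \<Rightarrow> real) \<Rightarrow> real"
  defines "add \<equiv> (\<lambda>x y i. x i + y i)" and "smul \<equiv> (\<lambda>a x i. a * x i)"
  assumes CV: "C \<subseteq> V" and cC: "compact C"
    and coord: "\<And>i x. x \<in> V \<Longrightarrow> \<bar>x i\<bar> \<le> N x"
    and lin_add: "\<And>x y. x \<in> V \<Longrightarrow> y \<in> V \<Longrightarrow> add x y \<in> V"
    and cont: "\<And>\<phi>. bounded_linear_functional_on V add smul N \<phi> \<Longrightarrow> continuous_on C \<phi>"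
  shows "compactin (weak_topology_on V add smul N) C \<and>
         homeomorphic_map (subtopology euclidean C) (subtopology (weak_topology_on V add smul N) C) id"
proof -
  define S where "S = {{x. f x \<in> U} | f U. bounded_linear_functional_on V add smul N f \<and> open U}"
  define W where "W = weak_topology_on V add smul N"
  have W: "W = subtopology (topology_generated_by S) V"
    unfolding W_def weak_topology_on_def S_def by simp
  have zero: "bounded_linear_functional_on V add smul N (\<lambda>x. 0)"
    unfolding bounded_linear_functional_on_def by (auto intro: exI[of _ 0])
  have coordf: "bounded_linear_functional_on V add smul N (\<lambda>x. x i)" for i
    unfolding bounded_linear_functional_on_def add_def smul_def
    using coord by (auto intro!: exI[of _ 1])
  have UNIV_S: "UNIV \<in> S"
    unfolding S_def using zero by (auto intro!: exI[of _ "\<lambda>x. 0"] exI[of _ UNIV])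
  have topW: "topspace W = V"
    using UNIV_S by (auto simp: W)
  have cm: "continuous_map (subtopology euclidean C) W id"
    unfolding W continuous_map_in_subtopology
  proof (intro conjI)
    show "continuous_map (subtopology euclidean C) (topology_generated_by S) id"
    proof (rule continuous_on_generated_topo)
      fix U assume "U \<in> S"
      then obtain f Q where U: "U = {x. f x \<in> Q}" and f: "bounded_linear_functional_on V add smul N f" and "open Q"
        unfolding S_def by blast
      have "continuous_on C f" using cont f by blast
      then have "openin (top_of_set C) (C \<inter> f -` Q)"
        using \<open>open Q\<close> continuous_openin_preimage_gen by blast
      then show "openin (subtopology euclidean C) (id -` U \<inter> topspace (subtopology euclidean C))"
        by (simp add: U Int_commute vimage_def)
    next
      show "id ` topspace (subtopology euclidean C) \<subseteq> \<Union> S" using UNIV_S by auto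
    qed
    show "id \<in> topspace (subtopology euclidean C) \<rightarrow> V" using CV by auto
  qed
  have cW: "compactin W C"
  proof -
    have "compactin (subtopology euclidean C) C"
      using cC by (simp add: compactin_subtopology compactin_euclidean_iff)
    then have "compactin W (id ` C)" using cm image_compactin by blast
    then show ?thesis by simp
  qed
  have HW: "Hausdorff_space W"
    unfolding Hausdorff_space_def topW
  proof (intro allI impI)
    fix x y assume "x \<in> V \<and> y \<in> V \<and> x \<noteq> y"
    then have xy: "x \<in> V" "y \<in> V" "x \<noteq> y" by auto
    then obtain i where i: "x i \<noteq> y i" by auto
    define r where "r = \<bar>x i - y i\<bar> / 2"
    have r: "r > 0" using i by (simp add: r_def)
    have op: "openin W ({z. z i \<in> ball a r} \<inter> V)" for a
      unfolding W openin_subtopology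
    proof (intro exI conjI)
      have "{z. z i \<in> ball a r} \<in> S"
        unfolding S_def using coordf[of i] by (intro CollectI exI[of _ "\<lambda>x. x i"] exI[of _ "ball a r"]) auto
      then show "openin (topology_generated_by S) {z. z i \<in> ball a r}"
        by (rule topology_generated_by_Basis)
    qed auto
    show "\<exists>U V'. openin W U \<and> openin W V' \<and> x \<in> U \<and> y \<in> V' \<and> disjnt U V'"
    proof (intro exI conjI)
      show "openin W ({z. z i \<in> ball (x i) r} \<inter> V)" "openin W ({z. z i \<in> ball (y i) r} \<inter> V)"
        by (rule op)+
      show "x \<in> {z. z i \<in> ball (x i) r} \<inter> V" "y \<in> {z. z i \<in> ball (y i) r} \<inter> V"
        using xy r by auto
      show "disjnt ({z. z i \<in> ball (x i) r} \<inter> V) ({z. z i \<in> ball (y i) r} \<inter> V)"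
        unfolding disjnt_def ball_def dist_real_def r_def by (auto, smt (verit))
    qed
  qed
  have hm: "homeomorphic_map (subtopology euclidean C) (subtopology W C) id"
  proof (rule continuous_imp_homeomorphic_map)
    show "continuous_map (subtopology euclidean C) (subtopology W C) id"
      using cm CV by (auto simp: continuous_map_in_subtopology)
    show "compact_space (subtopology euclidean C)"
      using cC by (simp add: compact_space_subtopology compactin_euclidean_iff)
    show "Hausdorff_space (subtopology W C)"
      using HW Hausdorff_space_subtopology by blast
    show "id ` topspace (subtopology euclidean C) = topspace (subtopology W C)"
      using CV topW by auto
    show "inj_on id (topspace (subtopology euclidean C))" by simp
  qed
  show ?thesis using cW hm unfolding W_def by simp
qed

lemma vs_pointwise:
  fixes V :: "('i \<Rightarrow> real) set"
  assumes "(\<lambda>i. 0) \<in> V" "\<And>x y. x \<in> V \<Longrightarrow> y \<in> V \<Longrightarrow> (\<lambda>i. x i + y i) \<in> V"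
    "\<And>a x. x \<in> V \<Longrightarrow> (\<lambda>i. a * x i) \<in> V"
  shows "real_vector_space_on V (\<lambda>x y i. x i + y i) (\<lambda>a x i. a * x i) (\<lambda>i. 0)"
  unfolding real_vector_space_on_def
proof (intro conjI ballI allI)
  fix x assume "x \<in> V"
  then show "\<exists>y\<in>V. (\<lambda>i. x i + y i) = (\<lambda>i. 0)"
    using assms(3)[of x "-1"] by (intro bexI[of _ "\<lambda>i. -1 * x i"]) auto
qed (auto intro: assms simp: algebra_simps)

definition c0 :: "('i \<Rightarrow> real) set" where
  "c0 = {x. \<forall>e>0. finite {i. e \<le> \<bar>x i\<bar>}}"

definition supn :: "('i \<Rightarrow> real) \<Rightarrow> real" where
  "supn x = (SUP i. \<bar>x i\<bar>)"

lemma c0_half: 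
  assumes x: "x \<in> c0" and e: "e > 0" shows "finite {i. e/2 \<le> \<bar>x i\<bar>}"
proof -
  have "0 < e/2" using e by simp
  then show ?thesis using x unfolding c0_def by blast
qed

lemma c0_bdd:
  assumes "x \<in> c0" shows "bdd_above (range (\<lambda>i. \<bar>x i\<bar>))"
proof -
  define F where "F = {i. 1 \<le> \<bar>x i\<bar>}"
  have fF: "finite F" using assms by (auto simp: c0_def F_def)
  have "\<bar>x i\<bar> \<le> 1 + (\<Sum>j\<in>F. \<bar>x j\<bar>)" for i
  proof (cases "i \<in> F")
    case True
    then have "\<bar>x i\<bar> \<le> (\<Sum>j\<in>F. \<bar>x j\<bar>)" using fF by (intro member_le_sum) auto
    then show ?thesis by simp
  next
    case False
    then have "\<bar>x i\<bar> < 1" by (auto simp: F_def)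
    moreover have "0 \<le> (\<Sum>j\<in>F. \<bar>x j\<bar>)" by (intro sum_nonneg) auto
    ultimately show ?thesis by linarith
  qed
  then show ?thesis by (intro bdd_aboveI2) blast
qed

lemma supn_upper: "x \<in> c0 \<Longrightarrow> \<bar>x i\<bar> \<le> supn x"
  unfolding supn_def by (rule cSUP_upper) (auto intro: c0_bdd)

lemma supn_least: "(\<And>i. \<bar>x i\<bar> \<le> b) \<Longrightarrow> supn x \<le> b"
  unfolding supn_def by (rule cSUP_least) auto

lemma supn_nonneg: "x \<in> c0 \<Longrightarrow> 0 \<le> supn x"
  using supn_upper[of x undefined] by linarith

lemma c0_zero: "(\<lambda>i. 0) \<in> c0"
  by (auto simp: c0_def)

lemma c0_add:
  assumes "x \<in> c0" "y \<in> c0" shows "(\<lambda>i. x i + y i) \<in> c0"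
  unfolding c0_def
proof (intro CollectI allI impI)
  fix e :: real assume e: "e > 0"
  have "{i. e \<le> \<bar>x i + y i\<bar>} \<subseteq> {i. e/2 \<le> \<bar>x i\<bar>} \<union> {i. e/2 \<le> \<bar>y i\<bar>}" by auto
  moreover have "finite ({i. e/2 \<le> \<bar>x i\<bar>} \<union> {i. e/2 \<le> \<bar>y i\<bar>})"
    using c0_half[OF assms(1) e] c0_half[OF assms(2) e] by blast
  ultimately show "finite {i. e \<le> \<bar>x i + y i\<bar>}" by (rule finite_subset)
qed

lemma c0_smul:
  assumes "x \<in> c0" shows "(\<lambda>i. a * x i) \<in> c0"
proof (cases "a = 0")
  case True then show ?thesis by (simp add: c0_zero)
next
  case False
  show ?thesis
    unfolding c0_def
  proof (intro CollectI allI impI)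
    fix e :: real assume e: "e > 0"
    have "{i. e \<le> \<bar>a * x i\<bar>} = {i. e / \<bar>a\<bar> \<le> \<bar>x i\<bar>}"
      using False by (auto simp: abs_mult field_simps)
    moreover have "finite {i. e / \<bar>a\<bar> \<le> \<bar>x i\<bar>}"
      using assms e False by (auto simp: c0_def)
    ultimately show "finite {i. e \<le> \<bar>a * x i\<bar>}" by simp
  qed
qed

lemma c0_finsupp:
  assumes "finite G" "\<And>j. j \<notin> G \<Longrightarrow> x j = 0" shows "x \<in> c0"
  unfolding c0_def
proof (intro CollectI allI impI)
  fix e :: real assume "e > 0"
  then have "{i. e \<le> \<bar>x i\<bar>} \<subseteq> G" using assms(2) by force
  then show "finite {i. e \<le> \<bar>x i\<bar>}" using assms(1) finite_subset by blast
qed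

lemma c0_le:
  assumes "x \<in> c0" "\<And>j. \<bar>y j\<bar> \<le> \<bar>x j\<bar>" shows "y \<in> c0"
  unfolding c0_def
proof (intro CollectI allI impI)
  fix e :: real assume "e > 0"
  have "{i. e \<le> \<bar>y i\<bar>} \<subseteq> {i. e \<le> \<bar>x i\<bar>}" using assms(2) order_trans by blast
  then show "finite {i. e \<le> \<bar>y i\<bar>}" using assms(1) \<open>e>0\<close> finite_subset by (auto simp: c0_def)
qed

lemma supn_zero: "supn (\<lambda>i. 0) = 0"
  by (simp add: supn_def)

lemma c0_norm_eq0: "x \<in> c0 \<Longrightarrow> (supn x = 0) = (x = (\<lambda>i. 0))"
proof
  assume x: "x \<in> c0" and "supn x = 0"
  then have "\<bar>x i\<bar> \<le> 0" for i using supn_upper[OF x, of i] by simp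
  then show "x = (\<lambda>i. 0)" by (intro ext) simp
qed (simp add: supn_zero)

lemma c0_homog: 
  assumes x: "x \<in> c0" shows "supn (\<lambda>i. a * x i) = \<bar>a\<bar> * supn x"
proof -
  have le: "supn (\<lambda>i. a * x i) \<le> \<bar>a\<bar> * supn x"
  proof (rule supn_least)
    fix i show "\<bar>a * x i\<bar> \<le> \<bar>a\<bar> * supn x"
      unfolding abs_mult by (rule mult_left_mono[OF supn_upper[OF x] abs_ge_zero])
  qed
  show "supn (\<lambda>i. a * x i) = \<bar>a\<bar> * supn x"
  proof (cases "a = 0")
    case True then show ?thesis by (simp add: supn_zero)
  next
    case False
    have "supn x \<le> supn (\<lambda>i. a * x i) / \<bar>a\<bar>"
    proof (rule supn_least)
      fix i
      have "\<bar>a * x i\<bar> \<le> supn (\<lambda>i. a * x i)" by (rule supn_upper[OF c0_smul[OF x]])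
      then show "\<bar>x i\<bar> \<le> supn (\<lambda>i. a * x i) / \<bar>a\<bar>"
        using False by (simp add: abs_mult field_simps)
    qed
    then have "\<bar>a\<bar> * supn x \<le> supn (\<lambda>i. a * x i)" using False by (simp add: field_simps)
    then show ?thesis using le by linarith
  qed
qed

lemma c0_triangle:
  assumes x: "x \<in> c0" and y: "y \<in> c0" shows "supn (\<lambda>i. x i + y i) \<le> supn x + supn y"
proof (rule supn_least)
  fix i show "\<bar>x i + y i\<bar> \<le> supn x + supn y"
    using supn_upper[OF x, of i] supn_upper[OF y, of i] by linarith
qed

lemma c0_complete:
  fixes s :: "nat \<Rightarrow> 'i \<Rightarrow> real"
  assumes sc: "\<And>n. s n \<in> c0"
    and cau0: "\<forall>e>0. \<exists>N. \<forall>m\<ge>N. \<forall>n\<ge>N. supn (\<lambda>i. s m i + - 1 * s n i) < e"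
  shows "\<exists>l\<in>c0. (\<lambda>n. supn (\<lambda>i. s n i + - 1 * l i)) \<longlonglongrightarrow> 0"
proof -
  have cau: "\<And>e. e > 0 \<Longrightarrow> \<exists>N. \<forall>m\<ge>N. \<forall>n\<ge>N. supn (\<lambda>i. s m i - s n i) < e"
    using cau0 by simp
  have pw: "\<bar>s m i - s n i\<bar> \<le> supn (\<lambda>i. s m i - s n i)" for m n i
    using supn_upper[OF c0_add[OF sc[of m] c0_smul[OF sc[of n], of "-1"]], of i] by simp
  have "Cauchy (\<lambda>n. s n i)" for i
  proof (rule CauchyI)
    fix e :: real assume "e > 0"
    then obtain N where N: "\<forall>m\<ge>N. \<forall>n\<ge>N. supn (\<lambda>i. s m i - s n i) < e" using cau by blast
    show "\<exists>M. \<forall>m\<ge>M. \<forall>n\<ge>M. norm (s m i - s n i) < e"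
    proof (intro exI[of _ N] allI impI)
      fix m n assume "m \<ge> N" "n \<ge> N"
      then show "norm (s m i - s n i) < e" using N pw[of m i n] by force
    qed
  qed
  then have "convergent (\<lambda>n. s n i)" for i by (simp add: Cauchy_convergent_iff)
  then obtain l where l: "\<And>i. (\<lambda>n. s n i) \<longlonglongrightarrow> l i"
    unfolding convergent_def by metis
  have est: "\<exists>N. \<forall>n\<ge>N. \<forall>i. \<bar>s n i - l i\<bar> \<le> e" if e: "e > 0" for e
  proof -
    obtain N where N: "\<forall>m\<ge>N. \<forall>n\<ge>N. supn (\<lambda>i. s m i - s n i) < e" using cau e by blast
    have "\<bar>s n i - l i\<bar> \<le> e" if "n \<ge> N" for n i
    proof (rule LIMSEQ_le_const2)
      show "(\<lambda>m. \<bar>s n i - s m i\<bar>) \<longlonglongrightarrow> \<bar>s n i - l i\<bar>"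
        by (intro tendsto_intros l)
      show "\<exists>M. \<forall>m\<ge>M. \<bar>s n i - s m i\<bar> \<le> e"
      proof (intro exI[of _ N] allI impI)
        fix m assume "m \<ge> N"
        then have "supn (\<lambda>i. s n i - s m i) < e" using N that by blast
        then show "\<bar>s n i - s m i\<bar> \<le> e" using pw[of n i m] by linarith
      qed
    qed
    then show ?thesis by blast
  qed
  have lc0: "l \<in> c0"
    unfolding c0_def
  proof (intro CollectI allI impI)
    fix e :: real assume e: "e > 0"
    obtain N where N: "\<forall>n\<ge>N. \<forall>i. \<bar>s n i - l i\<bar> \<le> e/2" using est[of "e/2"] e by auto
    have "{i. e \<le> \<bar>l i\<bar>} \<subseteq> {i. e/2 \<le> \<bar>s N i\<bar>}"
    proof
      fix i assume "i \<in> {i. e \<le> \<bar>l i\<bar>}"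
      moreover have "\<bar>s N i - l i\<bar> \<le> e/2" using N by auto
      ultimately show "i \<in> {i. e/2 \<le> \<bar>s N i\<bar>}" by (simp; smt (verit))
    qed
    moreover have "finite {i. e/2 \<le> \<bar>s N i\<bar>}" using c0_half[OF sc[of N] e] .
    ultimately show "finite {i. e \<le> \<bar>l i\<bar>}" by (rule finite_subset)
  qed
  show ?thesis
  proof (intro bexI[OF _ lc0] LIMSEQ_I)
    fix r :: real assume r: "r > 0"
    obtain N where N: "\<forall>n\<ge>N. \<forall>i. \<bar>s n i - l i\<bar> \<le> r/2" using est[of "r/2"] r by auto
    have "norm (supn (\<lambda>i. s n i + - 1 * l i) - 0) < r" if "n \<ge> N" for n
    proof -
      have "supn (\<lambda>i. s n i + - 1 * l i) \<le> r/2"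
        using N that by (intro supn_least) auto
      moreover have "0 \<le> supn (\<lambda>i. s n i + - 1 * l i)"
        by (intro supn_nonneg c0_add sc c0_smul lc0)
      ultimately show ?thesis using r by simp
    qed
    then show "\<exists>N. \<forall>n\<ge>N. norm (supn (\<lambda>i. s n i + - 1 * l i) - 0) < r" by (intro exI[of _ N]) auto
  qed
qed

lemma c0_banach:
  "banach_space_on c0 (\<lambda>x y i. x i + y i) (\<lambda>a x i. a * x i) (\<lambda>i. 0) supn"
proof -
  have 1: "real_vector_space_on c0 (\<lambda>x y i. x i + y i) (\<lambda>a x i. a * x i) (\<lambda>i. 0)"
    by (rule vs_pointwise) (auto intro: c0_zero c0_add c0_smul)
  have 2: "\<forall>s. (\<forall>n. s n \<in> c0) \<and> (\<forall>e>0. \<exists>N. \<forall>m\<ge>N. \<forall>n\<ge>N. supn (\<lambda>i. s m i + - 1 * s n i) < e) \<longrightarrow>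
     (\<exists>l\<in>c0. (\<lambda>n. supn (\<lambda>i. s n i + - 1 * l i)) \<longlonglongrightarrow> 0)"
    using c0_complete by blast
  show ?thesis unfolding banach_space_on_def
    apply (intro conjI)
    apply (rule 1)
    apply (simp add: supn_nonneg)
    apply (simp add: c0_norm_eq0)
    apply (simp add: c0_homog)
    apply (simp add: c0_triangle)
    apply (rule 2)
    done
qed

locale plin =
  fixes V :: "('i \<Rightarrow> real) set" and \<phi> :: "('i \<Rightarrow> real) \<Rightarrow> real"
  assumes V_fin: "\<And>G x. finite G \<Longrightarrow> (\<And>j. j \<notin> G \<Longrightarrow> x j = 0) \<Longrightarrow> x \<in> V"
    and V_add: "\<And>x y. x \<in> V \<Longrightarrow> y \<in> V \<Longrightarrow> (\<lambda>i. x i + y i) \<in> V"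
    and V_smul: "\<And>a x. x \<in> V \<Longrightarrow> (\<lambda>i. a * x i) \<in> V"
    and V_restr: "\<And>G x. x \<in> V \<Longrightarrow> (\<lambda>j. if j \<in> G then 0 else x j) \<in> V"
    and p_add: "\<And>x y. x \<in> V \<Longrightarrow> y \<in> V \<Longrightarrow> \<phi> (\<lambda>i. x i + y i) = \<phi> x + \<phi> y"
    and p_smul: "\<And>a x. x \<in> V \<Longrightarrow> \<phi> (\<lambda>i. a * x i) = a * \<phi> x"
begin

definition coef :: "'i \<Rightarrow> real" where "coef i = \<phi> (\<lambda>j. if j = i then 1 else 0)"

lemma p_zero: "\<phi> (\<lambda>j. 0) = 0"
proof -
  have "(\<lambda>j. 0::real) \<in> V" by (rule V_fin[of "{}"]) auto
  then have "\<phi> (\<lambda>i. 0 * (\<lambda>j. 0::real) i) = 0 * \<phi> (\<lambda>j. 0)" by (rule p_smul)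
  then show ?thesis by simp
qed

lemma p_fin:
  assumes "finite G"
  shows "\<phi> (\<lambda>j. if j \<in> G then y j else 0) = (\<Sum>i\<in>G. y i * coef i)"
  using assms
proof (induction G rule: finite_induct)
  case empty
  then show ?case using p_zero by simp
next
  case (insert i G)
  have e: "(\<lambda>j. if j \<in> insert i G then y j else 0) =
        (\<lambda>j. (\<lambda>j. if j \<in> G then y j else 0) j + (\<lambda>j. y i * (\<lambda>j. if j = i then 1 else 0) j) j)"
    using insert.hyps by (auto intro!: ext)
  have v1: "(\<lambda>j. if j \<in> G then y j else 0) \<in> V" by (rule V_fin[OF insert.hyps(1)]) auto
  have v2: "(\<lambda>j::'i. if j = i then 1 else (0::real)) \<in> V" by (rule V_fin[of "{i}"]) auto
  have "\<phi> (\<lambda>j. if j \<in> insert i G then y j else 0) = \<phi> (\<lambda>j. if j \<in> G then y j else 0) + y i * coef i"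
    unfolding e coef_def by (simp only: p_add[OF v1 V_smul[OF v2]] p_smul[OF v2])
  then show ?case using insert by simp
qed

lemma cont_generic:
  assumes CV: "C \<subseteq> V"
    and tail: "\<And>\<epsilon>. \<epsilon> > 0 \<Longrightarrow> \<exists>G0. finite G0 \<and>
        (\<forall>g\<in>C. \<forall>f\<in>C. \<bar>\<phi> (\<lambda>j. if j \<in> G0 then 0 else g j + - 1 * f j)\<bar> \<le> \<epsilon>)"
  shows "continuous_on C \<phi>"
  unfolding continuous_on_topological
proof (intro ballI allI impI)
  fix f B assume fC: "f \<in> C" and "open B" and "\<phi> f \<in> B"
  then obtain e where e: "e > 0" "ball (\<phi> f) e \<subseteq> B" using open_contains_ball by blast
  obtain G0 where G0: "finite G0" and
    t: "\<And>g. g \<in> C \<Longrightarrow> \<bar>\<phi> (\<lambda>j. if j \<in> G0 then 0 else g j + - 1 * f j)\<bar> \<le> e/2"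
    using tail[of "e/2"] e fC by auto
  define S where "S = (\<Sum>i\<in>G0. \<bar>coef i\<bar>)"
  have S0: "S \<ge> 0" unfolding S_def by (intro sum_nonneg) auto
  define \<delta> where "\<delta> = e / (2 * (S + 1))"
  have \<delta>: "\<delta> > 0" using e S0 by (simp add: \<delta>_def)
  define A where "A = {g. \<forall>i\<in>G0. g ((\<lambda>i. i) i) \<in> ball (f i) \<delta>}"
  show "\<exists>A. open A \<and> f \<in> A \<and> (\<forall>y\<in>C. y \<in> A \<longrightarrow> \<phi> y \<in> B)"
  proof (intro exI conjI ballI impI)
    show "open A" unfolding A_def by (rule product_topology_basis') (auto simp: G0)
    show "f \<in> A" using \<delta> by (simp add: A_def)
    fix g assume gC: "g \<in> C" and "g \<in> A"
    then have close: "\<bar>g i - f i\<bar> < \<delta>" if "i \<in> G0" for i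
      using that by (auto simp: A_def dist_real_def abs_minus_commute)
    have fV: "f \<in> V" and gV: "g \<in> V" using fC gC CV by auto
    define d where "d = (\<lambda>i. g i + - 1 * f i)"
    have dV: "d \<in> V" unfolding d_def by (intro V_add gV V_smul fV)
    have pd: "\<phi> d = \<phi> g - \<phi> f"
      unfolding d_def using p_add[OF gV V_smul[OF fV], of "-1"] p_smul[OF fV, of "-1"] by (simp only:)
    have dsplit: "d = (\<lambda>i. (\<lambda>j. if j \<in> G0 then d j else 0) i + (\<lambda>j. if j \<in> G0 then 0 else d j) i)"
      by (auto intro!: ext)
    have v1: "(\<lambda>j. if j \<in> G0 then d j else 0) \<in> V" by (rule V_fin[OF G0]) auto
    have v2: "(\<lambda>j. if j \<in> G0 then 0 else d j) \<in> V" by (rule V_restr[OF dV])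
    have "\<phi> d = \<phi> (\<lambda>j. if j \<in> G0 then d j else 0) + \<phi> (\<lambda>j. if j \<in> G0 then 0 else d j)"
      by (subst dsplit) (rule p_add[OF v1 v2])
    also have "\<phi> (\<lambda>j. if j \<in> G0 then d j else 0) = (\<Sum>i\<in>G0. d i * coef i)"
      by (rule p_fin[OF G0])
    finally have pd2: "\<phi> d = (\<Sum>i\<in>G0. d i * coef i) + \<phi> (\<lambda>j. if j \<in> G0 then 0 else d j)" .
    have "\<bar>\<Sum>i\<in>G0. d i * coef i\<bar> \<le> (\<Sum>i\<in>G0. \<bar>d i * coef i\<bar>)" by (rule sum_abs)
    also have "\<dots> \<le> (\<Sum>i\<in>G0. \<delta> * \<bar>coef i\<bar>)"
    proof (rule sum_mono)
      fix i assume "i \<in> G0"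
      then have "\<bar>d i\<bar> \<le> \<delta>" using close[of i] by (simp add: d_def)
      then show "\<bar>d i * coef i\<bar> \<le> \<delta> * \<bar>coef i\<bar>" unfolding abs_mult
        by (rule mult_right_mono) simp
    qed
    also have "\<dots> = \<delta> * S" by (simp add: S_def sum_distrib_left)
    also have "\<dots> < e/2"
    proof -
      have "\<delta> * S = e * S / (2 * (S + 1))" by (simp add: \<delta>_def)
      also have "\<dots> < e / 2" using e S0 by (simp add: field_simps)
      finally show ?thesis .
    qed
    finally have p1: "\<bar>\<Sum>i\<in>G0. d i * coef i\<bar> < e/2" .
    have p2: "\<bar>\<phi> (\<lambda>j. if j \<in> G0 then 0 else d j)\<bar> \<le> e/2"
      unfolding d_def using t[OF gC] by simp
    have "\<bar>\<phi> g - \<phi> f\<bar> < e" using pd pd2 p1 p2 by linarith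
    then have "\<phi> g \<in> ball (\<phi> f) e" by (simp add: dist_real_def abs_minus_commute)
    then show "\<phi> g \<in> B" using e by blast
  qed
qed

end

lemma sgn_mult_self_real: "sgn (x::real) * x = \<bar>x\<bar>"
  by (cases "x \<ge> 0") (auto simp: sgn_if)

lemma c0_cont:
  fixes \<phi> :: "('i \<Rightarrow> real) \<Rightarrow> real"
  assumes bl: "bounded_linear_functional_on c0 (\<lambda>x y i. x i + y i) (\<lambda>a x i. a * x i) supn \<phi>"
    and CC: "C \<subseteq> c0" and M: "\<And>x i. x \<in> C \<Longrightarrow> \<bar>x i\<bar> \<le> M"
  shows "continuous_on C \<phi>"
proof -
  have padd: "\<And>x y. x \<in> c0 \<Longrightarrow> y \<in> c0 \<Longrightarrow> \<phi> (\<lambda>i. x i + y i) = \<phi> x + \<phi> y"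
    and psmul: "\<And>a x. x \<in> c0 \<Longrightarrow> \<phi> (\<lambda>i. a * x i) = a * \<phi> x"
    using bl unfolding bounded_linear_functional_on_def by auto
  obtain c where c: "\<And>x. x \<in> c0 \<Longrightarrow> \<bar>\<phi> x\<bar> \<le> c * supn x"
    using bl unfolding bounded_linear_functional_on_def by blast
  define k where "k = max c 0"
  have k0: "k \<ge> 0" by (simp add: k_def)
  have ck: "\<bar>\<phi> x\<bar> \<le> k * supn x" if "x \<in> c0" for x
  proof -
    have "c * supn x \<le> k * supn x"
      using supn_nonneg[OF that] by (intro mult_right_mono) (auto simp: k_def)
    then show ?thesis using c[OF that] by linarith
  qed
  interpret plin c0 \<phi>
  proof
    show "\<And>G x. finite G \<Longrightarrow> (\<And>j. j \<notin> G \<Longrightarrow> x j = 0) \<Longrightarrow> x \<in> c0" by (rule c0_finsupp)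
    show "\<And>x y. x \<in> c0 \<Longrightarrow> y \<in> c0 \<Longrightarrow> (\<lambda>i. x i + y i) \<in> c0" by (rule c0_add)
    show "\<And>a x. x \<in> c0 \<Longrightarrow> (\<lambda>i. a * x i) \<in> c0" by (rule c0_smul)
    show "\<And>G x. x \<in> c0 \<Longrightarrow> (\<lambda>j. if j \<in> G then 0 else x j) \<in> c0"
      by (rule c0_le) auto
  qed (use padd psmul in auto)
  have L2: "(\<Sum>i\<in>G. \<bar>coef i\<bar>) \<le> k" if G: "finite G" for G
  proof -
    define y where "y = (\<lambda>j. if j \<in> G then sgn (coef j) else 0)"
    have yc: "y \<in> c0" unfolding y_def by (rule c0_finsupp[OF G]) auto
    have "supn y \<le> 1" unfolding y_def by (rule supn_least) (auto simp: sgn_if)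
    have "\<phi> y = (\<Sum>i\<in>G. sgn (coef i) * coef i)" unfolding y_def by (rule p_fin[OF G])
    also have "\<dots> = (\<Sum>i\<in>G. \<bar>coef i\<bar>)" by (simp add: sgn_mult_self_real)
    finally have "(\<Sum>i\<in>G. \<bar>coef i\<bar>) \<le> \<bar>\<phi> y\<bar>" by simp
    also have "\<dots> \<le> k * supn y" by (rule ck[OF yc])
    also have "\<dots> \<le> k * 1" using \<open>supn y \<le> 1\<close> k0 by (intro mult_left_mono)
    finally show ?thesis by simp
  qed
  have L3: "\<exists>G0. finite G0 \<and> (\<forall>G. finite G \<and> G \<inter> G0 = {} \<longrightarrow> (\<Sum>i\<in>G. \<bar>coef i\<bar>) \<le> \<epsilon>)"
    if \<epsilon>: "\<epsilon> > 0" for \<epsilon>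
  proof -
    define T where "T = (\<lambda>G. \<Sum>i\<in>G. \<bar>coef i\<bar>) ` {G. finite G}"
    have Tne: "T \<noteq> {}" unfolding T_def by auto
    have Tb: "bdd_above T" unfolding T_def using L2 by (auto intro!: bdd_aboveI)
    have "Sup T - \<epsilon> < Sup T" using \<epsilon> by simp
    then obtain t where "t \<in> T" "Sup T - \<epsilon> < t" using less_cSup_iff[OF Tne Tb] by blast
    then obtain G0 where G0: "finite G0" and t: "t = (\<Sum>i\<in>G0. \<bar>coef i\<bar>)" unfolding T_def by auto
    show ?thesis
    proof (intro exI conjI allI impI)
      fix G assume G: "finite G \<and> G \<inter> G0 = {}"
      have "(\<Sum>i\<in>G \<union> G0. \<bar>coef i\<bar>) = (\<Sum>i\<in>G. \<bar>coef i\<bar>) + (\<Sum>i\<in>G0. \<bar>coef i\<bar>)"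
        using G G0 by (intro sum.union_disjoint) auto
      moreover have "(\<Sum>i\<in>G \<union> G0. \<bar>coef i\<bar>) \<le> Sup T"
        using G G0 by (intro cSup_upper Tb) (auto simp: T_def)
      ultimately show "(\<Sum>i\<in>G. \<bar>coef i\<bar>) \<le> \<epsilon>"
        using \<open>Sup T - \<epsilon> < t\<close> t by linarith
    qed (rule G0)
  qed
  have L4: "\<bar>\<phi> x\<bar> \<le> Bd * \<epsilon>"
    if xc: "x \<in> c0" and x0: "\<And>j. j \<in> G0 \<Longrightarrow> x j = 0" and xB: "\<And>j. \<bar>x j\<bar> \<le> Bd"
      and Bd: "Bd \<ge> 0"
      and G0: "\<And>G. finite G \<Longrightarrow> G \<inter> G0 = {} \<Longrightarrow> (\<Sum>i\<in>G. \<bar>coef i\<bar>) \<le> \<epsilon>"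
    for x G0 Bd \<epsilon>
  proof (rule field_le_epsilon)
    fix \<eta> :: real assume \<eta>: "\<eta> > 0"
    define \<eta>' where "\<eta>' = \<eta> / (k + 1)"
    have \<eta>': "\<eta>' > 0" using \<eta> k0 by (simp add: \<eta>'_def)
    define G where "G = {j. \<eta>' \<le> \<bar>x j\<bar>}"
    have fG: "finite G" using xc \<eta>' by (auto simp: c0_def G_def)
    have dG: "G \<inter> G0 = {}" using x0 \<eta>' by (force simp: G_def)
    define x2 where "x2 = (\<lambda>j. if j \<in> G then 0 else x j)"
    have v1: "(\<lambda>j. if j \<in> G then x j else 0) \<in> c0" by (rule c0_finsupp[OF fG]) auto
    have v2: "x2 \<in> c0" unfolding x2_def by (rule c0_le[OF xc]) auto
    have xs: "x = (\<lambda>i. (\<lambda>j. if j \<in> G then x j else 0) i + x2 i)"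
      by (auto simp: x2_def intro!: ext)
    have "\<phi> x = \<phi> (\<lambda>j. if j \<in> G then x j else 0) + \<phi> x2"
      by (subst xs) (rule padd[OF v1 v2])
    also have "\<phi> (\<lambda>j. if j \<in> G then x j else 0) = (\<Sum>i\<in>G. x i * coef i)" by (rule p_fin[OF fG])
    finally have px: "\<phi> x = (\<Sum>i\<in>G. x i * coef i) + \<phi> x2" .
    have "\<bar>\<Sum>i\<in>G. x i * coef i\<bar> \<le> (\<Sum>i\<in>G. \<bar>x i * coef i\<bar>)" by (rule sum_abs)
    also have "\<dots> \<le> (\<Sum>i\<in>G. Bd * \<bar>coef i\<bar>)"
      unfolding abs_mult by (intro sum_mono mult_right_mono xB) auto
    also have "\<dots> = Bd * (\<Sum>i\<in>G. \<bar>coef i\<bar>)" by (simp add: sum_distrib_left)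
    also have "\<dots> \<le> Bd * \<epsilon>" using G0[OF fG dG] Bd by (intro mult_left_mono)
    finally have p1: "\<bar>\<Sum>i\<in>G. x i * coef i\<bar> \<le> Bd * \<epsilon>" .
    have "supn x2 \<le> \<eta>'"
      unfolding x2_def using \<eta>' by (intro supn_least) (auto simp: G_def)
    then have "\<bar>\<phi> x2\<bar> \<le> k * \<eta>'" using ck[OF v2] k0 by (meson mult_left_mono order_trans)
    also have "k * \<eta>' \<le> \<eta>"
    proof -
      have "k * \<eta>' = \<eta> * (k / (k + 1))" by (simp add: \<eta>'_def)
      also have "\<dots> \<le> \<eta> * 1" using \<eta> k0 by (intro mult_left_mono) auto
      finally show ?thesis by simp
    qed
    finally have p2: "\<bar>\<phi> x2\<bar> \<le> \<eta>" .
    show "\<bar>\<phi> x\<bar> \<le> Bd * \<epsilon> + \<eta>" using px p1 p2 by linarith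
  qed
  define M' where "M' = max M 0"
  have M': "\<And>x i. x \<in> C \<Longrightarrow> \<bar>x i\<bar> \<le> M'" "M' \<ge> 0"
    using M by (auto simp: M'_def intro: le_max_iff_disj[THEN iffD2])
  show ?thesis
  proof (rule cont_generic[OF CC])
    fix \<epsilon> :: real assume \<epsilon>: "\<epsilon> > 0"
    define \<epsilon>' where "\<epsilon>' = \<epsilon> / (2 * M' + 1)"
    have \<epsilon>': "\<epsilon>' > 0" using \<epsilon> M' by (simp add: \<epsilon>'_def)
    obtain G0 where G0: "finite G0" and G0s: "\<And>G. finite G \<Longrightarrow> G \<inter> G0 = {} \<Longrightarrow> (\<Sum>i\<in>G. \<bar>coef i\<bar>) \<le> \<epsilon>'"
      using L3[OF \<epsilon>'] by blast
    show "\<exists>G0. finite G0 \<and> (\<forall>g\<in>C. \<forall>f\<in>C. \<bar>\<phi> (\<lambda>j. if j \<in> G0 then 0 else g j + - 1 * f j)\<bar> \<le> \<epsilon>)"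
    proof (intro exI conjI ballI)
      fix g f assume gC: "g \<in> C" and fC: "f \<in> C"
      have xc: "(\<lambda>j. if j \<in> G0 then 0 else g j + - 1 * f j) \<in> c0"
        using gC fC CC by (intro V_restr V_add V_smul) auto
      have "\<bar>\<phi> (\<lambda>j. if j \<in> G0 then 0 else g j + - 1 * f j)\<bar> \<le> (2 * M') * \<epsilon>'"
      proof (rule L4[OF xc])
        fix j show "\<bar>if j \<in> G0 then 0 else g j + - 1 * f j\<bar> \<le> 2 * M'"
          using M'(1)[OF gC, of j] M'(1)[OF fC, of j] M'(2) by auto
      qed (use M' G0s in auto)
      also have "(2 * M') * \<epsilon>' \<le> \<epsilon>"
      proof -
        have "(2 * M') * \<epsilon>' = \<epsilon> * ((2 * M') / (2 * M' + 1))" by (simp add: \<epsilon>'_def)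
        also have "\<dots> \<le> \<epsilon> * 1" using \<epsilon> M' by (intro mult_left_mono) auto
        finally show ?thesis by simp
      qed
      finally show "\<bar>\<phi> (\<lambda>j. if j \<in> G0 then 0 else g j + - 1 * f j)\<bar> \<le> \<epsilon>" .
    qed (rule G0)
  qed
qed

definition l2 :: "('i \<Rightarrow> real) set" where
  "l2 = {x. (\<lambda>i. (x i)^2) summable_on UNIV}"

definition inn :: "('i \<Rightarrow> real) \<Rightarrow> ('i \<Rightarrow> real) \<Rightarrow> real" where
  "inn x y = (\<Sum>\<^sub>\<infinity>i. x i * y i)"

lemma l2_sq_le: "x \<in> l2 \<Longrightarrow> finite F \<Longrightarrow> (\<Sum>i\<in>F. (x i)^2) \<le> inn x x"
  unfolding inn_def l2_def power2_eq_square
  by (rule finite_sum_le_infsum) auto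

lemma l2_coord: "x \<in> l2 \<Longrightarrow> (x i)^2 \<le> inn x x"
  using l2_sq_le[of x "{i}"] by simp

lemma l2_coord_abs: "x \<in> l2 \<Longrightarrow> \<bar>x i\<bar> \<le> sqrt (inn x x)"
  using l2_coord[of x i] real_sqrt_le_mono real_sqrt_abs by metis

lemma inn_nonneg: "0 \<le> inn x x"
  unfolding inn_def by (rule infsum_nonneg) simp

lemma l2_le:
  assumes "x \<in> l2" "\<And>j. \<bar>y j\<bar> \<le> \<bar>x j\<bar>" shows "y \<in> l2"
  unfolding l2_def
proof (rule CollectI, rule summable_on_comparison_test)
  show "(\<lambda>i. (x i)^2) summable_on UNIV" using assms(1) by (simp add: l2_def)
  fix i show "(y i)^2 \<le> (x i)^2" using assms(2)[of i]
    by (metis abs_ge_zero power2_abs power_mono)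
  show "0 \<le> (y i)^2" by simp
qed

lemma l2_zero: "(\<lambda>i. 0) \<in> l2"
  by (simp add: l2_def)

lemma l2_smul: 
  assumes "x \<in> l2" shows "(\<lambda>i. a * x i) \<in> l2"
proof -
  have "(\<lambda>i. a^2 * (x i)^2) summable_on UNIV"
    using assms unfolding l2_def by (intro summable_on_cmult_right) simp
  then show ?thesis unfolding l2_def by (simp add: power_mult_distrib)
qed

lemma l2_add:
  assumes "x \<in> l2" "y \<in> l2" shows "(\<lambda>i. x i + y i) \<in> l2"
  unfolding l2_def
proof (rule CollectI, rule summable_on_comparison_test)
  show "(\<lambda>i. 2 * (x i)^2 + 2 * (y i)^2) summable_on UNIV"
    using assms by (intro summable_on_add summable_on_cmult_right) (auto simp: l2_def)
  fix i show "(x i + y i)^2 \<le> 2 * (x i)^2 + 2 * (y i)^2"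
    using sum_squares_ge_zero[of "x i - y i" 0] by (simp add: power2_eq_square algebra_simps)
  show "0 \<le> (x i + y i)^2" by simp
qed

lemma l2_fin: "finite G \<Longrightarrow> (\<And>j. j \<notin> G \<Longrightarrow> x j = 0) \<Longrightarrow> x \<in> l2"
  unfolding l2_def by (intro CollectI finite_nonzero_values_imp_summable_on) (auto intro: finite_subset)

lemma l2_prod:
  assumes "x \<in> l2" "y \<in> l2" shows "(\<lambda>i. x i * y i) summable_on UNIV"
proof -
  have "(\<lambda>i. (x i)^2 + (y i)^2) summable_on UNIV"
    using assms by (intro summable_on_add) (auto simp: l2_def)
  then have a: "(\<lambda>i. norm ((x i)^2 + (y i)^2)) summable_on UNIV" by simp
  have b: "norm (x i * y i) \<le> norm ((x i)^2 + (y i)^2)" for i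
  proof -
    have "2 * \<bar>x i * y i\<bar> \<le> (x i)^2 + (y i)^2"
      using sum_squares_ge_zero[of "\<bar>x i\<bar> - \<bar>y i\<bar>" 0]
      by (simp add: power2_eq_square algebra_simps abs_mult)
    then show ?thesis by simp
  qed
  have "(\<lambda>i. norm (x i * y i)) summable_on UNIV"
    by (rule Infinite_Sum.abs_summable_on_comparison_test[OF a]) (rule b)
  then show ?thesis by (rule Infinite_Sum.abs_summable_summable)
qed

lemma inn_sym: "inn x y = inn y x"
  unfolding inn_def by (simp add: mult.commute)

lemma inn_add:
  assumes "x \<in> l2" "y \<in> l2" "z \<in> l2"
  shows "inn (\<lambda>i. x i + y i) z = inn x z + inn y z"
  unfolding inn_def distrib_right using assms by (intro infsum_add l2_prod)

lemma inn_smul: "x \<in> l2 \<Longrightarrow> y \<in> l2 \<Longrightarrow> inn (\<lambda>i. a * x i) y = a * inn x y"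
  unfolding inn_def mult.assoc by (rule infsum_cmult_right) (rule l2_prod)

lemma inn_CS:
  assumes x: "x \<in> l2" and y: "y \<in> l2"
  shows "\<bar>inn x y\<bar> \<le> sqrt (inn x x) * sqrt (inn y y)"
proof -
  let ?B = "sqrt (inn x x) * sqrt (inn y y)"
  have fin: "(\<Sum>i\<in>F. \<bar>x i\<bar> * \<bar>y i\<bar>) \<le> ?B" if "finite F" for F
  proof -
    have "(\<Sum>i\<in>F. \<bar>x i\<bar> * \<bar>y i\<bar>) \<le> L2_set x F * L2_set y F" by (rule L2_set_mult_ineq)
    also have "\<dots> \<le> ?B"
      unfolding L2_set_def
      by (intro mult_mono real_sqrt_le_mono l2_sq_le x y that) (auto simp: inn_nonneg sum_nonneg)
    finally show ?thesis .
  qed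
  have s: "(\<lambda>i. x i * y i) summable_on UNIV" by (rule l2_prod[OF x y])
  have "(\<Sum>\<^sub>\<infinity>i. x i * y i) \<le> ?B"
  proof (rule infsum_le_finite_sums[OF s])
    fix F :: "'a set" assume "finite F" "F \<subseteq> UNIV"
    have "(\<Sum>i\<in>F. x i * y i) \<le> (\<Sum>i\<in>F. \<bar>x i\<bar> * \<bar>y i\<bar>)"
      by (intro sum_mono) (simp add: abs_mult[symmetric])
    then show "(\<Sum>i\<in>F. x i * y i) \<le> ?B" using fin[OF \<open>finite F\<close>] by linarith
  qed
  then have "inn x y \<le> ?B" by (simp add: inn_def)
  moreover have "- inn x y \<le> ?B"
  proof -
    have s': "(\<lambda>i. - (x i * y i)) summable_on UNIV" using s by (simp add: summable_on_uminus)
    have "(\<Sum>\<^sub>\<infinity>i. - (x i * y i)) \<le> ?B"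
    proof (rule infsum_le_finite_sums[OF s'])
      fix F :: "'a set" assume "finite F" "F \<subseteq> UNIV"
      have "(\<Sum>i\<in>F. - (x i * y i)) \<le> (\<Sum>i\<in>F. \<bar>x i\<bar> * \<bar>y i\<bar>)"
        by (intro sum_mono) (simp add: abs_mult[symmetric])
      then show "(\<Sum>i\<in>F. - (x i * y i)) \<le> ?B" using fin[OF \<open>finite F\<close>] by linarith
    qed
    then show ?thesis unfolding inn_def by (simp add: infsum_uminus)
  qed
  ultimately show ?thesis by linarith
qed

lemma inn_self_add:
  assumes x: "x \<in> l2" and y: "y \<in> l2"
  shows "inn (\<lambda>i. x i + y i) (\<lambda>i. x i + y i) = inn x x + 2 * inn x y + inn y y"
proof -
  have xy: "(\<lambda>i. x i + y i) \<in> l2" by (rule l2_add[OF x y])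
  have "inn (\<lambda>i. x i + y i) (\<lambda>i. x i + y i) = inn x (\<lambda>i. x i + y i) + inn y (\<lambda>i. x i + y i)"
    by (rule inn_add[OF x y xy])
  also have "inn x (\<lambda>i. x i + y i) = inn x x + inn y x"
    by (subst inn_sym) (rule inn_add[OF x y x])
  also have "inn y (\<lambda>i. x i + y i) = inn x y + inn y y"
    by (subst inn_sym) (rule inn_add[OF x y y])
  finally show ?thesis by (simp add: inn_sym[of y x])
qed

lemma l2_triangle:
  assumes x: "x \<in> l2" and y: "y \<in> l2"
  shows "sqrt (inn (\<lambda>i. x i + y i) (\<lambda>i. x i + y i)) \<le> sqrt (inn x x) + sqrt (inn y y)"
proof -
  have A: "0 \<le> inn x x" "0 \<le> inn y y" by (rule inn_nonneg)+
  have "inn (\<lambda>i. x i + y i) (\<lambda>i. x i + y i) \<le> (sqrt (inn x x) + sqrt (inn y y))^2"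
  proof -
    have "inn (\<lambda>i. x i + y i) (\<lambda>i. x i + y i) = inn x x + 2 * inn x y + inn y y"
      by (rule inn_self_add[OF x y])
    also have "\<dots> \<le> inn x x + 2 * (sqrt (inn x x) * sqrt (inn y y)) + inn y y"
      using inn_CS[OF x y] by linarith
    also have "\<dots> = (sqrt (inn x x) + sqrt (inn y y))^2"
      using A by (simp add: power2_eq_square algebra_simps)
    finally show ?thesis .
  qed
  then have "sqrt (inn (\<lambda>i. x i + y i) (\<lambda>i. x i + y i)) \<le> sqrt ((sqrt (inn x x) + sqrt (inn y y))^2)"
    by (rule real_sqrt_le_mono)
  also have "\<dots> = sqrt (inn x x) + sqrt (inn y y)" using A by simp
  finally show ?thesis .
qed

lemma l2_homog:
  assumes x: "x \<in> l2"
  shows "sqrt (inn (\<lambda>i. a * x i) (\<lambda>i. a * x i)) = \<bar>a\<bar> * sqrt (inn x x)"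
proof -
  have "inn (\<lambda>i. a * x i) (\<lambda>i. a * x i) = a * (a * inn x x)"
    using inn_smul[OF x l2_smul[OF x], of a] inn_sym[of x "\<lambda>i. a * x i"] inn_smul[OF x x, of a]
    by simp
  then have "inn (\<lambda>i. a * x i) (\<lambda>i. a * x i) = a^2 * inn x x" by (simp add: power2_eq_square)
  then show ?thesis by (simp add: real_sqrt_mult)
qed

lemma inn_zero: "inn (\<lambda>i. 0) (\<lambda>i. 0) = 0"
  by (simp add: inn_def)

lemma l2_eq0:
  assumes x: "x \<in> l2" shows "(sqrt (inn x x) = 0) = (x = (\<lambda>i. 0))"
proof
  assume "sqrt (inn x x) = 0"
  then have "inn x x = 0" by simp
  then have "(x i)^2 \<le> 0" for i using l2_coord[OF x, of i] by simp
  then show "x = (\<lambda>i. 0)" by (intro ext) simp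
qed (simp add: inn_zero)

lemma l2_complete:
  fixes s :: "nat \<Rightarrow> 'i \<Rightarrow> real"
  assumes sc: "\<And>n. s n \<in> l2"
    and cau: "\<forall>e>0. \<exists>N. \<forall>m\<ge>N. \<forall>n\<ge>N.
       sqrt (inn (\<lambda>i. s m i + - 1 * s n i) (\<lambda>i. s m i + - 1 * s n i)) < e"
  shows "\<exists>l\<in>l2. (\<lambda>n. sqrt (inn (\<lambda>i. s n i + - 1 * l i) (\<lambda>i. s n i + - 1 * l i))) \<longlonglongrightarrow> 0"
proof -
  have dl2: "(\<lambda>i. s m i + - 1 * s n i) \<in> l2" for m n
    by (intro l2_add sc l2_smul)
  have pw: "\<bar>s m i - s n i\<bar> \<le> sqrt (inn (\<lambda>i. s m i + - 1 * s n i) (\<lambda>i. s m i + - 1 * s n i))" for m n i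
    using l2_coord_abs[OF dl2[of m n], of i] by simp
  have "Cauchy (\<lambda>n. s n i)" for i
  proof (rule CauchyI)
    fix e :: real assume "e > 0"
    then obtain N where N: "\<forall>m\<ge>N. \<forall>n\<ge>N. sqrt (inn (\<lambda>i. s m i + - 1 * s n i) (\<lambda>i. s m i + - 1 * s n i)) < e"
      using cau by blast
    show "\<exists>M. \<forall>m\<ge>M. \<forall>n\<ge>M. norm (s m i - s n i) < e"
    proof (intro exI[of _ N] allI impI)
      fix m n assume "m \<ge> N" "n \<ge> N"
      then show "norm (s m i - s n i) < e" using N pw[of m i n] by force
    qed
  qed
  then have "convergent (\<lambda>n. s n i)" for i by (simp add: Cauchy_convergent_iff)
  then obtain l where l: "\<And>i. (\<lambda>n. s n i) \<longlonglongrightarrow> l i"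
    unfolding convergent_def by metis
  define d where "d n = (\<lambda>i. s n i + - 1 * l i)" for n
  have est: "\<exists>N. \<forall>n\<ge>N. d n \<in> l2 \<and> inn (d n) (d n) \<le> e^2" if e: "e > 0" for e
  proof -
    obtain N where N: "\<forall>m\<ge>N. \<forall>n\<ge>N. sqrt (inn (\<lambda>i. s m i + - 1 * s n i) (\<lambda>i. s m i + - 1 * s n i)) < e"
      using cau e by blast
    have fin: "(\<Sum>i\<in>F. (d n i)^2) \<le> e^2" if n: "n \<ge> N" and F: "finite F" for n F
    proof (rule LIMSEQ_le_const2)
      show "(\<lambda>m. \<Sum>i\<in>F. (s n i + - 1 * s m i)^2) \<longlonglongrightarrow> (\<Sum>i\<in>F. (d n i)^2)"
        unfolding d_def by (intro tendsto_intros l)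
      show "\<exists>M. \<forall>m\<ge>M. (\<Sum>i\<in>F. (s n i + - 1 * s m i)^2) \<le> e^2"
      proof (intro exI[of _ N] allI impI)
        fix m assume m: "m \<ge> N"
        have "(\<Sum>i\<in>F. (s n i + - 1 * s m i)^2) \<le> inn (\<lambda>i. s n i + - 1 * s m i) (\<lambda>i. s n i + - 1 * s m i)"
          by (rule l2_sq_le[OF dl2 F])
        also have "\<dots> \<le> e^2"
        proof -
          have "sqrt (inn (\<lambda>i. s n i + - 1 * s m i) (\<lambda>i. s n i + - 1 * s m i)) < e"
            using N n m by blast
          then have "sqrt (inn (\<lambda>i. s n i + - 1 * s m i) (\<lambda>i. s n i + - 1 * s m i))^2 \<le> e^2"
            by (intro power_mono) (auto simp: inn_nonneg)
          moreover have "sqrt (inn (\<lambda>i. s n i + - 1 * s m i) (\<lambda>i. s n i + - 1 * s m i))^2 =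
              inn (\<lambda>i. s n i + - 1 * s m i) (\<lambda>i. s n i + - 1 * s m i)"
            by (rule real_sqrt_pow2[OF inn_nonneg])
          ultimately show ?thesis by linarith
        qed
        finally show "(\<Sum>i\<in>F. (s n i + - 1 * s m i)^2) \<le> e^2" .
      qed
    qed
    have "d n \<in> l2 \<and> inn (d n) (d n) \<le> e^2" if n: "n \<ge> N" for n
    proof
      have sm: "(\<lambda>i. (d n i)^2) summable_on UNIV"
      proof (rule nonneg_bdd_above_summable_on)
        show "bdd_above (sum (\<lambda>i. (d n i)^2) ` {F. F \<subseteq> UNIV \<and> finite F})"
          using fin[OF n] by (intro bdd_aboveI2) auto
      qed simp
      then show "d n \<in> l2" by (simp add: l2_def)
      show "inn (d n) (d n) \<le> e^2"
        unfolding inn_def using fin[OF n] sm by (intro infsum_le_finite_sums) (auto simp: power2_eq_square)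
    qed
    then show ?thesis by blast
  qed
  obtain N1 where N1: "\<forall>n\<ge>N1. d n \<in> l2 \<and> inn (d n) (d n) \<le> 1^2" using est[of 1] by auto
  have "l = (\<lambda>i. s N1 i + - 1 * d N1 i)" by (auto simp: d_def)
  then have ll2: "l \<in> l2" using N1 by (metis l2_add l2_smul order_refl sc)
  show ?thesis
  proof (intro bexI[OF _ ll2] LIMSEQ_I)
    fix r :: real assume r: "r > 0"
    obtain N where N: "\<forall>n\<ge>N. d n \<in> l2 \<and> inn (d n) (d n) \<le> (r/2)^2" using est[of "r/2"] r by auto
    have "norm (sqrt (inn (d n) (d n)) - 0) < r" if "n \<ge> N" for n
    proof -
      have "sqrt (inn (d n) (d n)) \<le> sqrt ((r/2)^2)" using N that real_sqrt_le_mono by blast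
      also have "\<dots> = r/2" using r by simp
      finally show ?thesis using r by (simp add: inn_nonneg)
    qed
    then show "\<exists>N. \<forall>n\<ge>N. norm (sqrt (inn (\<lambda>i. s n i + - 1 * l i) (\<lambda>i. s n i + - 1 * l i)) - 0) < r"
      unfolding d_def by (intro exI[of _ N]) auto
  qed
qed

lemma l2_hilbert:
  "hilbert_space_on l2 (\<lambda>x y i. x i + y i) (\<lambda>a x i. a * x i) (\<lambda>i. 0) inn"
proof -
  have 1: "real_vector_space_on l2 (\<lambda>x y i. x i + y i) (\<lambda>a x i. a * x i) (\<lambda>i. 0)"
    by (rule vs_pointwise) (auto intro: l2_zero l2_add l2_smul)
  have 2: "\<forall>s. (\<forall>n. s n \<in> l2) \<and> (\<forall>e>0. \<exists>N. \<forall>m\<ge>N. \<forall>n\<ge>N.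
        sqrt (inn (\<lambda>i. s m i + - 1 * s n i) (\<lambda>i. s m i + - 1 * s n i)) < e) \<longrightarrow>
     (\<exists>l\<in>l2. (\<lambda>n. sqrt (inn (\<lambda>i. s n i + - 1 * l i) (\<lambda>i. s n i + - 1 * l i))) \<longlonglongrightarrow> 0)"
    using l2_complete by blast
  have e0: "\<forall>x\<in>l2. (sqrt (inn x x) = 0) = (x = (\<lambda>i. 0))" using l2_eq0 by blast
  have hm: "\<forall>a. \<forall>x\<in>l2. sqrt (inn (\<lambda>i. a * x i) (\<lambda>i. a * x i)) = \<bar>a\<bar> * sqrt (inn x x)"
    using l2_homog by blast
  have tr: "\<forall>x\<in>l2. \<forall>y\<in>l2. sqrt (inn (\<lambda>i. x i + y i) (\<lambda>i. x i + y i)) \<le> sqrt (inn x x) + sqrt (inn y y)"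
    using l2_triangle by blast
  have 3: "banach_space_on l2 (\<lambda>x y i. x i + y i) (\<lambda>a x i. a * x i) (\<lambda>i. 0) (\<lambda>x. sqrt (inn x x))"
    unfolding banach_space_on_def
    apply (intro conjI)
    apply (rule 1)
    apply (simp add: inn_nonneg)
    apply (rule e0)
    apply (rule hm)
    apply (rule tr)
    apply (rule 2)
    done
  show ?thesis
    unfolding hilbert_space_on_def
    apply (intro conjI)
    apply (simp add: inn_sym)
    apply (simp add: inn_add)
    apply (simp add: inn_smul)
    apply (simp add: inn_nonneg)
    apply (rule 3)
    done
qed

lemma inn_fin:
  assumes "finite G" "\<And>j. j \<notin> G \<Longrightarrow> y j = 0"
  shows "inn y y = (\<Sum>i\<in>G. (y i)^2)"
proof -
  have "inn y y = (\<Sum>\<^sub>\<infinity>i\<in>G. y i * y i)"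
    unfolding inn_def by (rule infsum_cong_neutral) (use assms in auto)
  also have "\<dots> = (\<Sum>i\<in>G. (y i)^2)" using assms(1) by (simp add: power2_eq_square)
  finally show ?thesis .
qed

lemma inn_mono:
  assumes "x \<in> l2" "y \<in> l2" "\<And>j. \<bar>y j\<bar> \<le> \<bar>x j\<bar>" shows "inn y y \<le> inn x x"
  unfolding inn_def
proof (rule infsum_mono)
  show "(\<lambda>i. y i * y i) summable_on UNIV" "(\<lambda>i. x i * x i) summable_on UNIV"
    using assms by (auto intro: l2_prod)
  fix i show "y i * y i \<le> x i * x i" using assms(3)[of i]
    by (metis abs_ge_zero abs_mult_self_eq mult_mono)
qed

lemma l2_cont:
  fixes \<phi> :: "('i \<Rightarrow> real) \<Rightarrow> real"
  assumes bl: "bounded_linear_functional_on l2 (\<lambda>x y i. x i + y i) (\<lambda>a x i. a * x i) (\<lambda>x. sqrt (inn x x)) \<phi>"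
    and CC: "C \<subseteq> l2" and R: "\<And>x. x \<in> C \<Longrightarrow> inn x x \<le> R"
  shows "continuous_on C \<phi>"
proof -
  have padd: "\<And>x y. x \<in> l2 \<Longrightarrow> y \<in> l2 \<Longrightarrow> \<phi> (\<lambda>i. x i + y i) = \<phi> x + \<phi> y"
    and psmul: "\<And>a x. x \<in> l2 \<Longrightarrow> \<phi> (\<lambda>i. a * x i) = a * \<phi> x"
    using bl unfolding bounded_linear_functional_on_def by auto
  obtain c where c: "\<And>x. x \<in> l2 \<Longrightarrow> \<bar>\<phi> x\<bar> \<le> c * sqrt (inn x x)"
    using bl unfolding bounded_linear_functional_on_def by blast
  define k where "k = max c 0"
  have k0: "k \<ge> 0" by (simp add: k_def)
  have ck: "\<bar>\<phi> x\<bar> \<le> k * sqrt (inn x x)" if "x \<in> l2" for x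
  proof -
    have "c * sqrt (inn x x) \<le> k * sqrt (inn x x)"
      by (intro mult_right_mono) (auto simp: k_def inn_nonneg)
    then show ?thesis using c[OF that] by linarith
  qed
  interpret plin l2 \<phi>
  proof
    show "\<And>G x. finite G \<Longrightarrow> (\<And>j. j \<notin> G \<Longrightarrow> x j = 0) \<Longrightarrow> x \<in> l2" by (rule l2_fin)
    show "\<And>x y. x \<in> l2 \<Longrightarrow> y \<in> l2 \<Longrightarrow> (\<lambda>i. x i + y i) \<in> l2" by (rule l2_add)
    show "\<And>a x. x \<in> l2 \<Longrightarrow> (\<lambda>i. a * x i) \<in> l2" by (rule l2_smul)
    show "\<And>G x. x \<in> l2 \<Longrightarrow> (\<lambda>j. if j \<in> G then 0 else x j) \<in> l2"
      by (rule l2_le) auto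
  qed (use padd psmul in auto)
  have L2: "(\<Sum>i\<in>G. (coef i)^2) \<le> k^2" if G: "finite G" for G
  proof -
    define S where "S = (\<Sum>i\<in>G. (coef i)^2)"
    define y where "y = (\<lambda>j. if j \<in> G then coef j else 0)"
    have yc: "y \<in> l2" unfolding y_def by (rule l2_fin[OF G]) auto
    have iy: "inn y y = S" unfolding S_def by (subst inn_fin[OF G]) (auto simp: y_def)
    have "\<phi> y = (\<Sum>i\<in>G. coef i * coef i)" unfolding y_def by (rule p_fin[OF G])
    then have py: "\<phi> y = S" by (simp add: S_def power2_eq_square)
    have S0: "S \<ge> 0" unfolding S_def by (intro sum_nonneg) auto
    have Sk: "S \<le> k * sqrt S" using ck[OF yc] py iy by simp
    show ?thesis
    proof (cases "S = 0")
      case True then show ?thesis by (simp add: S_def[symmetric])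
    next
      case False
      then have "sqrt S > 0" using S0 by simp
      have "sqrt S * sqrt S \<le> k * sqrt S" using Sk S0 by simp
      then have "sqrt S \<le> k" using \<open>sqrt S > 0\<close> by (rule mult_right_le_imp_le)
      then have "(sqrt S)^2 \<le> k^2" using \<open>sqrt S > 0\<close> by (intro power_mono) auto
      then show ?thesis using S0 by (simp add: S_def[symmetric])
    qed
  qed
  have L3: "\<exists>G0. finite G0 \<and> (\<forall>G. finite G \<and> G \<inter> G0 = {} \<longrightarrow> (\<Sum>i\<in>G. (coef i)^2) \<le> \<epsilon>)"
    if \<epsilon>: "\<epsilon> > 0" for \<epsilon>
  proof -
    define T where "T = (\<lambda>G. \<Sum>i\<in>G. (coef i)^2) ` {G. finite G}"
    have Tne: "T \<noteq> {}" unfolding T_def by auto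
    have Tb: "bdd_above T" unfolding T_def using L2 by (auto intro!: bdd_aboveI)
    have "Sup T - \<epsilon> < Sup T" using \<epsilon> by simp
    then obtain t where "t \<in> T" "Sup T - \<epsilon> < t" using less_cSup_iff[OF Tne Tb] by blast
    then obtain G0 where G0: "finite G0" and t: "t = (\<Sum>i\<in>G0. (coef i)^2)" unfolding T_def by auto
    show ?thesis
    proof (intro exI conjI allI impI)
      fix G assume G: "finite G \<and> G \<inter> G0 = {}"
      have "(\<Sum>i\<in>G \<union> G0. (coef i)^2) = (\<Sum>i\<in>G. (coef i)^2) + (\<Sum>i\<in>G0. (coef i)^2)"
        using G G0 by (intro sum.union_disjoint) auto
      moreover have "(\<Sum>i\<in>G \<union> G0. (coef i)^2) \<le> Sup T"
        using G G0 by (intro cSup_upper Tb) (auto simp: T_def)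
      ultimately show "(\<Sum>i\<in>G. (coef i)^2) \<le> \<epsilon>"
        using \<open>Sup T - \<epsilon> < t\<close> t by linarith
    qed (rule G0)
  qed
  have L4: "\<bar>\<phi> x\<bar> \<le> sqrt Q * sqrt \<epsilon>"
    if xc: "x \<in> l2" and x0: "\<And>j. j \<in> G0 \<Longrightarrow> x j = 0" and xQ: "inn x x \<le> Q"
      and G0: "\<And>G. finite G \<Longrightarrow> G \<inter> G0 = {} \<Longrightarrow> (\<Sum>i\<in>G. (coef i)^2) \<le> \<epsilon>"
    for x G0 Q \<epsilon>
  proof (rule field_le_epsilon)
    fix \<eta> :: real assume \<eta>: "\<eta> > 0"
    define \<eta>' where "\<eta>' = \<eta> / (k + 1)"
    have \<eta>': "\<eta>' > 0" using \<eta> k0 by (simp add: \<eta>'_def)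
    have sx: "(\<lambda>i. (x i)^2) summable_on UNIV" using xc by (simp add: l2_def)
    have sup: "inn x x = (SUP F\<in>{F. finite F \<and> F \<subseteq> UNIV}. (\<Sum>i\<in>F. (x i)^2))"
      unfolding inn_def power2_eq_square[symmetric] by (rule infsum_nonneg_is_SUPREMUM_real[OF sx]) simp
    have bdd: "bdd_above ((\<lambda>F. \<Sum>i\<in>F. (x i)^2) ` {F. finite F \<and> F \<subseteq> UNIV})"
      using l2_sq_le[OF xc] by (intro bdd_aboveI2) auto
    have "inn x x - \<eta>'^2 < inn x x" using \<eta>' by simp
    then obtain G1 where G1: "finite G1" and G1s: "inn x x - \<eta>'^2 < (\<Sum>i\<in>G1. (x i)^2)"
      unfolding sup by (subst (asm) less_cSUP_iff[OF _ bdd]) auto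
    define G where "G = G1 - G0"
    have fG: "finite G" using G1 by (simp add: G_def)
    have dG: "G \<inter> G0 = {}" by (auto simp: G_def)
    have sG: "(\<Sum>i\<in>G. (x i)^2) = (\<Sum>i\<in>G1. (x i)^2)"
      unfolding G_def by (rule sum.mono_neutral_left) (use G1 x0 in auto)
    define x1 where "x1 = (\<lambda>j. if j \<in> G then x j else 0)"
    define x2 where "x2 = (\<lambda>j. if j \<in> G then 0 else x j)"
    have v1: "x1 \<in> l2" unfolding x1_def by (rule l2_fin[OF fG]) auto
    have v2: "x2 \<in> l2" unfolding x2_def by (rule l2_le[OF xc]) auto
    have xs: "x = (\<lambda>i. x1 i + x2 i)" by (auto simp: x1_def x2_def intro!: ext)
    have "\<phi> x = \<phi> x1 + \<phi> x2" by (subst xs) (rule padd[OF v1 v2])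
    also have "\<phi> x1 = (\<Sum>i\<in>G. x i * coef i)" unfolding x1_def by (rule p_fin[OF fG])
    finally have px: "\<phi> x = (\<Sum>i\<in>G. x i * coef i) + \<phi> x2" .
    have i1: "inn x1 x1 = (\<Sum>i\<in>G. (x i)^2)" by (subst inn_fin[OF fG]) (auto simp: x1_def)
    have "inn x x = inn x1 x1 + inn x2 x2"
    proof -
      have "inn x x = (\<Sum>\<^sub>\<infinity>i. x1 i * x1 i + x2 i * x2 i)"
        unfolding inn_def by (rule infsum_cong) (auto simp: x1_def x2_def)
      also have "\<dots> = inn x1 x1 + inn x2 x2"
        unfolding inn_def by (intro infsum_add l2_prod v1 v2)
      finally show ?thesis .
    qed
    then have i2: "inn x2 x2 < \<eta>'^2" using i1 sG G1s by linarith
    have "\<bar>\<Sum>i\<in>G. x i * coef i\<bar> \<le> (\<Sum>i\<in>G. \<bar>x i * coef i\<bar>)"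
      by (rule sum_abs)
    also have "\<dots> = (\<Sum>i\<in>G. \<bar>x i\<bar> * \<bar>coef i\<bar>)" by (simp add: abs_mult)
    also have "\<dots> \<le> L2_set x G * L2_set coef G" by (rule L2_set_mult_ineq)
    also have "\<dots> \<le> sqrt Q * sqrt \<epsilon>"
      unfolding L2_set_def
    proof (intro mult_mono real_sqrt_le_mono)
      show "(\<Sum>i\<in>G. (x i)^2) \<le> Q" using l2_sq_le[OF xc fG] xQ by linarith
      show "(\<Sum>i\<in>G. (coef i)^2) \<le> \<epsilon>" by (rule G0[OF fG dG])
    qed (use xQ inn_nonneg[of x] in \<open>auto intro: sum_nonneg\<close>)
    finally have p1: "\<bar>\<Sum>i\<in>G. x i * coef i\<bar> \<le> sqrt Q * sqrt \<epsilon>" .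
    have "sqrt (inn x2 x2) \<le> \<eta>'"
    proof -
      have "sqrt (inn x2 x2) \<le> sqrt (\<eta>'^2)" using i2 by (intro real_sqrt_le_mono) simp
      then show ?thesis using \<eta>' by simp
    qed
    then have "\<bar>\<phi> x2\<bar> \<le> k * \<eta>'" using ck[OF v2] k0 by (meson mult_left_mono order_trans)
    also have "k * \<eta>' \<le> \<eta>"
    proof -
      have "k * \<eta>' = \<eta> * (k / (k + 1))" by (simp add: \<eta>'_def)
      also have "\<dots> \<le> \<eta> * 1" using \<eta> k0 by (intro mult_left_mono) auto
      finally show ?thesis by simp
    qed
    finally have p2: "\<bar>\<phi> x2\<bar> \<le> \<eta>" .
    show "\<bar>\<phi> x\<bar> \<le> sqrt Q * sqrt \<epsilon> + \<eta>" using px p1 p2 by linarith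
  qed
  define R' where "R' = max R 0"
  have R': "\<And>x. x \<in> C \<Longrightarrow> sqrt (inn x x) \<le> sqrt R'" "R' \<ge> 0"
    using R by (auto simp: R'_def intro!: real_sqrt_le_mono le_max_iff_disj[THEN iffD2])
  show ?thesis
  proof (rule cont_generic[OF CC])
    fix \<epsilon> :: real assume \<epsilon>: "\<epsilon> > 0"
    define \<epsilon>' where "\<epsilon>' = \<epsilon>^2 / (4 * R' + 1)"
    have \<epsilon>': "\<epsilon>' > 0" using \<epsilon> R' by (simp add: \<epsilon>'_def)
    obtain G0 where G0: "finite G0" and G0s: "\<And>G. finite G \<Longrightarrow> G \<inter> G0 = {} \<Longrightarrow> (\<Sum>i\<in>G. (coef i)^2) \<le> \<epsilon>'"
      using L3[OF \<epsilon>'] by blast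
    show "\<exists>G0. finite G0 \<and> (\<forall>g\<in>C. \<forall>f\<in>C. \<bar>\<phi> (\<lambda>j. if j \<in> G0 then 0 else g j + - 1 * f j)\<bar> \<le> \<epsilon>)"
    proof (intro exI conjI ballI)
      fix g f assume gC: "g \<in> C" and fC: "f \<in> C"
      have gl: "g \<in> l2" and fl: "f \<in> l2" using gC fC CC by auto
      define d where "d = (\<lambda>i. g i + - 1 * f i)"
      have dl: "d \<in> l2" unfolding d_def by (intro l2_add l2_smul gl fl)
      have xc: "(\<lambda>j. if j \<in> G0 then 0 else d j) \<in> l2" by (rule V_restr[OF dl])
      have "sqrt (inn d d) \<le> sqrt (inn g g) + sqrt (inn (\<lambda>i. - 1 * f i) (\<lambda>i. - 1 * f i))"
        unfolding d_def by (rule l2_triangle[OF gl l2_smul[OF fl]])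
      also have "sqrt (inn (\<lambda>i. - 1 * f i) (\<lambda>i. - 1 * f i)) = sqrt (inn f f)"
        using l2_homog[OF fl, of "-1"] by simp
      finally have "sqrt (inn d d) \<le> 2 * sqrt R'" using R'(1)[OF gC] R'(1)[OF fC] by linarith
      then have "(sqrt (inn d d))^2 \<le> (2 * sqrt R')^2" using inn_nonneg[of d] by (intro power_mono) auto
      then have dQ: "inn d d \<le> 4 * R'" using R'(2) inn_nonneg[of d] by (simp add: power_mult_distrib)
      have "inn (\<lambda>j. if j \<in> G0 then 0 else d j) (\<lambda>j. if j \<in> G0 then 0 else d j) \<le> inn d d"
        by (rule inn_mono[OF dl xc]) auto
      then have xQ: "inn (\<lambda>j. if j \<in> G0 then 0 else d j) (\<lambda>j. if j \<in> G0 then 0 else d j) \<le> 4 * R'"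
        using dQ by linarith
      have "\<bar>\<phi> (\<lambda>j. if j \<in> G0 then 0 else d j)\<bar> \<le> sqrt (4 * R') * sqrt \<epsilon>'"
        by (rule L4[OF xc _ xQ]) (use G0s in auto)
      also have "\<dots> \<le> \<epsilon>"
      proof -
        have "sqrt (4 * R') * sqrt \<epsilon>' = sqrt (\<epsilon>^2 * ((4 * R') / (4 * R' + 1)))"
          by (simp add: \<epsilon>'_def real_sqrt_mult[symmetric] field_simps)
        also have "\<dots> \<le> sqrt (\<epsilon>^2 * 1)"
          using R'(2) by (intro real_sqrt_le_mono mult_left_mono) auto
        also have "\<dots> = \<epsilon>" using \<epsilon> by simp
        finally show ?thesis .
      qed
      finally have "\<bar>\<phi> (\<lambda>j. if j \<in> G0 then 0 else d j)\<bar> \<le> \<epsilon>" .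
      then show "\<bar>\<phi> (\<lambda>j. if j \<in> G0 then 0 else g j + - 1 * f j)\<bar> \<le> \<epsilon>"
        unfolding d_def .
    qed (rule G0)
  qed
qed

locale emb =
  fixes X :: "'a topology" and P :: "'a set set" and w :: "'a set \<Rightarrow> real"
  assumes t0: "t0_space X" and cl: "clopen_family X P"
    and sb: "subbase_of (P \<union> {topspace X - U | U. U \<in> P}) X"
    and wpos: "\<And>U. U \<in> P \<Longrightarrow> w U > 0"
begin

definition e :: "'a \<Rightarrow> 'a set \<Rightarrow> real" where
  "e x = (\<lambda>U. if U \<in> P \<and> x \<in> U then w U else 0)"

definition wp :: "'a set \<Rightarrow> real" where
  "wp U = (if U \<in> P then w U else 0)"

definition Cl :: "('a set \<Rightarrow> real) set" where
  "Cl = closure (e ` topspace X)"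

lemma P_open: "U \<in> P \<Longrightarrow> openin X U" and P_closed: "U \<in> P \<Longrightarrow> closedin X U"
  and P_sub: "U \<in> P \<Longrightarrow> U \<subseteq> topspace X"
  using cl by (auto simp: clopen_family_def dest: openin_subset)

lemma sub_nbhd:
  assumes "openin X W" "x \<in> W"
  shows "\<exists>F. finite F \<and> F \<subseteq> P \<union> {topspace X - U | U. U \<in> P} \<and> x \<in> topspace X \<and>
     (\<forall>s\<in>F. x \<in> s) \<and> topspace X \<inter> \<Inter>F \<subseteq> W"
proof -
  let ?S = "P \<union> {topspace X - U | U. U \<in> P}"
  have eq: "openin X = arbitrary union_of (finite intersection_of (\<lambda>U. U \<in> ?S) relative_to topspace X)"
    using sb unfolding subbase_of_def by blast
  have "(arbitrary union_of (finite intersection_of (\<lambda>U. U \<in> ?S) relative_to topspace X)) W"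
    using assms(1) unfolding eq .
  then obtain \<U> where U1: "\<U> \<subseteq> Collect (finite intersection_of (\<lambda>U. U \<in> ?S) relative_to topspace X)"
    and U2: "\<Union>\<U> = W"
    unfolding union_of_def by blast
  then obtain b where b: "b \<in> \<U>" "x \<in> b" using assms(2) by blast
  then have "(finite intersection_of (\<lambda>U. U \<in> ?S) relative_to topspace X) b" using U1 by blast
  then obtain S' where S': "(finite intersection_of (\<lambda>U. U \<in> ?S)) S'" "topspace X \<inter> S' = b"
    unfolding relative_to_def by blast
  then obtain F where F: "finite F" "F \<subseteq> ?S" "\<Inter>F = S'"
    unfolding intersection_of_def by auto
  show ?thesis
  proof (intro exI conjI)
    show "finite F" "F \<subseteq> ?S" by (rule F)+
    show "x \<in> topspace X" using b S' by blast
    show "\<forall>s\<in>F. x \<in> s" using b S' F by blast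
    show "topspace X \<inter> \<Inter>F \<subseteq> W" using S' F b U2 by blast
  qed
qed

lemma sep1:
  assumes "openin X W" "x \<in> W" "y \<in> topspace X" "y \<notin> W"
  shows "\<exists>U\<in>P. \<not> (x \<in> U \<longleftrightarrow> y \<in> U)"
proof -
  obtain F where F: "finite F" "F \<subseteq> P \<union> {topspace X - U | U. U \<in> P}" "\<forall>s\<in>F. x \<in> s"
    "topspace X \<inter> \<Inter>F \<subseteq> W" "x \<in> topspace X"
    using sub_nbhd[OF assms(1,2)] by blast
  have "\<not> (\<forall>s\<in>F. y \<in> s)"
  proof
    assume "\<forall>s\<in>F. y \<in> s"
    then have "y \<in> topspace X \<inter> \<Inter>F" using assms(3) by simp
    then show False using F(4) assms(4) by (meson subsetD)
  qed
  then obtain s where s: "s \<in> F" "y \<notin> s" by blast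
  have sx: "x \<in> s" using F(3) s(1) by blast
  have "s \<in> P \<or> (\<exists>U. s = topspace X - U \<and> U \<in> P)" using F(2) s(1) by blast
  then show ?thesis
  proof
    assume "s \<in> P" then show ?thesis using s(2) sx by blast
  next
    assume "\<exists>U. s = topspace X - U \<and> U \<in> P"
    then obtain U where U: "U \<in> P" "s = topspace X - U" by blast
    have "x \<notin> U" using sx U(2) by simp
    moreover have "y \<in> U" using s(2) U(2) assms(3) by simp
    ultimately show ?thesis using U(1) by blast
  qed
qed

lemma sep:
  assumes "x \<in> topspace X" "y \<in> topspace X" "x \<noteq> y"
  shows "\<exists>U\<in>P. \<not> (x \<in> U \<longleftrightarrow> y \<in> U)"
proof -
  obtain W where W: "openin X W" "x \<notin> W \<longleftrightarrow> y \<in> W"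
    using t0 assms unfolding t0_space_def by blast
  show ?thesis
  proof (cases "x \<in> W")
    case True
    then show ?thesis using sep1[OF W(1) True assms(2)] W(2) by blast
  next
    case False
    then have "y \<in> W" using W(2) by blast
    then show ?thesis using sep1[OF W(1) \<open>y \<in> W\<close> assms(1)] False by blast
  qed
qed

lemma e_inj: "inj_on e (topspace X)"
proof (rule inj_onI)
  fix x y assume x: "x \<in> topspace X" and y: "y \<in> topspace X" and exy: "e x = e y"
  show "x = y"
  proof (rule ccontr)
    assume "x \<noteq> y"
    then obtain U where U: "U \<in> P" "\<not> (x \<in> U \<longleftrightarrow> y \<in> U)" using sep x y by blast
    have "e x U = e y U" using exy by simp
    then show False using U wpos[OF U(1)] by (auto simp: e_def split: if_splits)
  qed
qed

lemma e_cont_coord: "continuous_map X euclidean (\<lambda>x. e x U)"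
proof (cases "U \<in> P")
  case False
  then show ?thesis by (simp add: e_def)
next
  case True
  show ?thesis
    unfolding continuous_map_def
  proof (intro conjI allI impI)
    show "(\<lambda>x. e x U) \<in> topspace X \<rightarrow> topspace euclidean" by simp
    fix O' :: "real set" assume "openin euclidean O'"
    have eq: "{x \<in> topspace X. e x U \<in> O'} =
        (if w U \<in> O' then U else {}) \<union> (if 0 \<in> O' then topspace X - U else {})"
      using True P_sub[OF True] by (auto simp: e_def)
    have "openin X (topspace X - U)" using P_closed[OF True] by (simp add: openin_diff)
    then show "openin X {x \<in> topspace X. e x U \<in> O'}"
      unfolding eq using P_open[OF True] by auto
  qed
qed

lemma e_cont: "continuous_map X euclidean e"
proof -
  have "continuous_map X (product_topology (\<lambda>_. euclidean) UNIV) e"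
    unfolding continuous_map_componentwise_UNIV using e_cont_coord by blast
  then show ?thesis by (simp add: euclidean_product_topology)
qed

lemma B_closed: "closed {f :: 'a set \<Rightarrow> real. \<forall>U. f U = 0 \<or> f U = wp U}"
  by (intro closed_Collect_all closed_Collect_disj closed_Collect_eq continuous_on_const
      continuous_on_product_coordinates)

lemma B_compact: "compact {f :: 'a set \<Rightarrow> real. \<forall>U. f U = 0 \<or> f U = wp U}"
proof -
  have eq: "{f :: 'a set \<Rightarrow> real. \<forall>U. f U = 0 \<or> f U = wp U} = Pi\<^sub>E UNIV (\<lambda>U. {0, wp U})"
    by (auto simp: PiE_def extensional_def Pi_def)
  have "compactin (product_topology (\<lambda>_. euclidean) UNIV) (Pi\<^sub>E UNIV (\<lambda>U. {0::real, wp U}))"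
    by (subst compactin_PiE) (auto simp: compactin_euclidean_iff)
  then show ?thesis unfolding eq euclidean_product_topology compactin_euclidean_iff .
qed

lemma Cl_sub_B: "Cl \<subseteq> {f. \<forall>U. f U = 0 \<or> f U = wp U}"
  unfolding Cl_def
  by (rule closure_minimal[OF _ B_closed]) (auto simp: e_def wp_def)

lemma Cl_compact: "compact Cl"
proof -
  have "compact ({f. \<forall>U. f U = 0 \<or> f U = wp U} \<inter> Cl)"
    unfolding Cl_def by (rule compact_Int_closed[OF B_compact closed_closure])
  moreover have "{f. \<forall>U. f U = 0 \<or> f U = wp U} \<inter> Cl = Cl" using Cl_sub_B by blast
  ultimately show ?thesis by simp
qed

lemma Cl_vals: "f \<in> Cl \<Longrightarrow> f U \<noteq> 0 \<Longrightarrow> U \<in> P \<and> f U = w U"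
  using Cl_sub_B by (auto simp: wp_def split: if_splits)

lemma Cl_vals2: 
  assumes "f \<in> Cl" shows "0 \<le> f U \<and> f U \<le> (if U \<in> P then w U else 0)"
proof -
  have "f U = 0 \<or> f U = wp U" using Cl_sub_B assms by blast
  then show ?thesis using wpos[of U] by (cases "U \<in> P") (auto simp: wp_def)
qed

lemma Cl_fip:
  assumes f: "f \<in> Cl" and F: "finite F" "\<And>U. U \<in> F \<Longrightarrow> f U \<noteq> 0"
  shows "\<exists>x\<in>topspace X. \<forall>U\<in>F. x \<in> U"
proof -
  define O' where "O' = {g :: 'a set \<Rightarrow> real. \<forall>U\<in>F. g ((\<lambda>U. U) U) \<in> - {0}}"
  have "open O'" unfolding O'_def by (rule product_topology_basis') (auto simp: F)
  moreover have "f \<in> O'" using F by (auto simp: O'_def)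
  moreover have "\<forall>A. \<forall>S\<subseteq>A. open S \<longrightarrow> f \<in> S \<longrightarrow> e ` topspace X \<inter> A \<noteq> {}"
    using f unfolding Cl_def closure_iff_nhds_not_empty .
  ultimately have "e ` topspace X \<inter> O' \<noteq> {}" by blast
  then obtain x where x: "x \<in> topspace X" "e x \<in> O'" by blast
  then have "\<forall>U\<in>F. x \<in> U" by (auto simp: O'_def e_def split: if_splits)
  then show ?thesis using x by blast
qed

lemma compl_P: "s \<in> {topspace X - U | U. U \<in> P} \<Longrightarrow> topspace X - s \<in> P \<and> s = topspace X - (topspace X - s)"
proof -
  assume "s \<in> {topspace X - U | U. U \<in> P}"
  then obtain U where U: "U \<in> P" "s = topspace X - U" by blast
  have "topspace X - s = U" using P_sub[OF U(1)] U(2) by blast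
  then show ?thesis using U by blast
qed

lemma e_open_map: "open_map X (top_of_set (e ` topspace X)) e"
  unfolding open_map_def
proof (intro allI impI)
  fix W assume W: "openin X W"
  show "openin (top_of_set (e ` topspace X)) (e ` W)"
  proof (subst openin_subopen, intro ballI)
    fix y assume "y \<in> e ` W"
    then obtain x where x: "x \<in> W" "y = e x" by blast
    obtain F where F: "finite F" "F \<subseteq> P \<union> {topspace X - U | U. U \<in> P}" "x \<in> topspace X"
      "\<forall>s\<in>F. x \<in> s" "topspace X \<inter> \<Inter>F \<subseteq> W"
      using sub_nbhd[OF W x(1)] by blast
    define c where "c s = (if s \<in> P then s else topspace X - s)" for s
    define V where "V s = (if s \<in> P then - {0::real} else ball (0::real) (w (topspace X - s)))" for s
    define O' where "O' = {g :: 'a set \<Rightarrow> real. \<forall>s\<in>F. g (c s) \<in> V s}"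
    have oO: "open O'" unfolding O'_def by (rule product_topology_basis') (auto simp: F(1) V_def)
    have key: "e z \<in> O' \<longleftrightarrow> (\<forall>s\<in>F. z \<in> s)" if z: "z \<in> topspace X" for z
    proof -
      have "e z (c s) \<in> V s \<longleftrightarrow> z \<in> s" if s: "s \<in> F" for s
      proof (cases "s \<in> P")
        case True
        then show ?thesis using wpos[OF True] by (auto simp: c_def V_def e_def)
      next
        case False
        then have s2: "s \<in> {topspace X - U | U. U \<in> P}" using F(2) s by blast
        have U: "topspace X - s \<in> P" "s = topspace X - (topspace X - s)" using compl_P[OF s2] by auto
        have wU: "w (topspace X - s) > 0" by (rule wpos[OF U(1)])
        have "e z (c s) \<in> V s \<longleftrightarrow> z \<notin> topspace X - s"
          using False U(1) wU by (auto simp: c_def V_def e_def)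
        also have "\<dots> \<longleftrightarrow> z \<in> s" using z U(2) by blast
        finally show ?thesis .
      qed
      then show ?thesis unfolding O'_def by blast
    qed
    show "\<exists>T. openin (top_of_set (e ` topspace X)) T \<and> y \<in> T \<and> T \<subseteq> e ` W"
    proof (intro exI conjI)
      show "openin (top_of_set (e ` topspace X)) (e ` topspace X \<inter> O')"
        using oO by (rule openin_open_Int)
      show "y \<in> e ` topspace X \<inter> O'" using x F(3,4) key by auto
      show "e ` topspace X \<inter> O' \<subseteq> e ` W"
      proof
        fix g assume "g \<in> e ` topspace X \<inter> O'"
        then obtain z where z: "z \<in> topspace X" "g = e z" "e z \<in> O'" by blast
        then have "z \<in> topspace X \<inter> \<Inter>F" using key by blast
        then have "z \<in> W" using F(5) by blast
        then show "g \<in> e ` W" using z by blast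
      qed
    qed
  qed
qed

lemma e_embedding: "embedding_map X (top_of_set Cl) e"
proof -
  have IC: "e ` topspace X \<subseteq> Cl" unfolding Cl_def by (rule closure_subset)
  have sub: "subtopology (top_of_set Cl) (e ` topspace X) = top_of_set (e ` topspace X)"
    using IC by (simp add: subtopology_subtopology Int_absorb1)
  show ?thesis unfolding embedding_map_def sub
  proof (rule bijective_open_imp_homeomorphic_map)
    show "continuous_map X (top_of_set (e ` topspace X)) e"
      using e_cont by (auto simp: continuous_map_in_subtopology)
    show "open_map X (top_of_set (e ` topspace X)) e" by (rule e_open_map)
    show "e ` topspace X = topspace (top_of_set (e ` topspace X))" by simp
    show "inj_on e (topspace X)" by (rule e_inj)
  qed
qed

lemma Cl_dim: "top_of_set Cl dim_le 0"
  unfolding dimension_le_0_neighbourhood_base_of_clopen neighbourhood_base_of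
proof (intro allI impI)
  fix W f assume Wf: "openin (top_of_set Cl) W \<and> f \<in> W"
  then obtain O' where O': "open O'" "W = Cl \<inter> O'" by (auto simp: openin_open)
  have fC: "f \<in> Cl" and fO: "f \<in> O'" using Wf O' by auto
  have "openin (product_topology (\<lambda>_. euclidean) UNIV) O'" using O'(1) by (simp add: open_fun_def)
  then obtain Ub where Ub: "finite {i \<in> UNIV. Ub i \<noteq> topspace euclidean}"
    "\<forall>i\<in>UNIV. openin euclidean (Ub i)" "f \<in> Pi\<^sub>E UNIV Ub" "Pi\<^sub>E UNIV Ub \<subseteq> O'"
    using fO unfolding openin_product_topology_alt by blast
  define J where "J = {i. Ub i \<noteq> UNIV}"
  have fJ: "finite J" using Ub(1) by (simp add: J_def)
  define V where "V = {g \<in> Cl. \<forall>U\<in>J. g U = f U}"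
  define r where "r U = (if U \<in> P then w U else 1)" for U
  have rpos: "r U > 0" for U using wpos by (simp add: r_def)
  have eqv: "g U = f U \<longleftrightarrow> g U \<in> ball (f U) (r U)" if g: "g \<in> Cl" for g U
  proof -
    have "g U = 0 \<or> g U = wp U" "f U = 0 \<or> f U = wp U" using Cl_sub_B g fC by blast+
    then show ?thesis using wpos[of U] rpos[of U] by (cases "U \<in> P") (auto simp: wp_def r_def dist_real_def)
  qed
  have V1: "V = Cl \<inter> {g. \<forall>U\<in>J. g ((\<lambda>U. U) U) \<in> ball (f U) (r U)}"
    unfolding V_def using eqv by auto
  have V2: "V = Cl \<inter> (\<Inter>U\<in>J. {g. g U = f U})"
    unfolding V_def by auto
  show "\<exists>U V. openin (top_of_set Cl) U \<and> (closedin (top_of_set Cl) V \<and> openin (top_of_set Cl) V) \<and>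
        f \<in> U \<and> U \<subseteq> V \<and> V \<subseteq> W"
  proof (intro exI conjI)
    have "open {g :: 'a set \<Rightarrow> real. \<forall>U\<in>J. g ((\<lambda>U. U) U) \<in> ball (f U) (r U)}"
      by (rule product_topology_basis') (auto simp: fJ)
    then show oV: "openin (top_of_set Cl) V" unfolding V1 by (rule openin_open_Int)
    then show "openin (top_of_set Cl) V" .
    have "closed (\<Inter>U\<in>J. {g :: 'a set \<Rightarrow> real. g U = f U})"
      by (intro closed_INT ballI closed_Collect_eq continuous_on_const continuous_on_product_coordinates)
    then show "closedin (top_of_set Cl) V" unfolding V2 by (rule closedin_closed_Int)
    show "f \<in> V" using fC by (simp add: V_def)
    show "V \<subseteq> V" by simp
    show "V \<subseteq> W"
    proof
      fix g assume g: "g \<in> V"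
      have "g \<in> Pi\<^sub>E UNIV Ub"
      proof (unfold PiE_def, intro IntI)
        show "g \<in> Pi UNIV Ub"
        proof (rule Pi_I)
          fix i :: "'a set"
          show "g i \<in> Ub i"
          proof (cases "i \<in> J")
            case True
            then have "g i = f i" using g by (simp add: V_def)
            then show ?thesis using Ub(3) by (auto simp: PiE_def)
          next
            case False then show ?thesis by (simp add: J_def)
          qed
        qed
        show "g \<in> extensional UNIV" by simp
      qed
      then show "g \<in> W" using Ub(4) g O'(2) by (auto simp: V_def)
    qed
  qed
qed

lemma Cl_Hausdorff: "Hausdorff_space (top_of_set Cl)"
proof -
  have "Hausdorff_space (euclidean :: ('a set \<Rightarrow> real) topology)"
    by (metis Hausdorff_space_euclidean Hausdorff_space_product_topology euclidean_product_topology)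
  then show ?thesis by (rule Hausdorff_space_subtopology)
qed

end

context emb begin

lemma fin_strong:
  assumes Q: "strongly_point_finite Q" and f: "f \<in> Cl"
  shows "finite {U \<in> Q. f U \<noteq> 0}"
proof (rule ccontr)
  assume "infinite {U \<in> Q. f U \<noteq> 0}"
  then have "\<exists>C\<subseteq>{U \<in> Q. f U \<noteq> 0}. countable C \<and> infinite C" by (rule infinite_countable_subset')
  then obtain Q' where Q': "Q' \<subseteq> {U \<in> Q. f U \<noteq> 0}" "countable Q'" "infinite Q'" by blast
  have "Q' \<subseteq> Q" using Q'(1) by blast
  then have "\<exists>F. F \<subseteq> Q' \<and> finite F \<and> F \<noteq> {} \<and> \<Inter>F = {}"
    using Q Q'(2,3) unfolding strongly_point_finite_def by blast
  then obtain F where F: "F \<subseteq> Q'" "finite F" "F \<noteq> {}" "\<Inter>F = {}" by blast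
  have nz: "\<And>U. U \<in> F \<Longrightarrow> f U \<noteq> 0" using F(1) Q'(1) by blast
  obtain x where "x \<in> topspace X" "\<forall>U\<in>F. x \<in> U" using Cl_fip[OF f F(2) nz] by blast
  then have "x \<in> \<Inter>F" by blast
  then show False using F(4) by simp
qed

lemma fin_bounded:
  assumes Q: "\<And>F. F \<subseteq> Q \<Longrightarrow> finite F \<Longrightarrow> card F = b + 2 \<Longrightarrow> \<Inter>F = {}" and f: "f \<in> Cl"
  shows "finite {U \<in> Q. f U \<noteq> 0} \<and> card {U \<in> Q. f U \<noteq> 0} \<le> b + 1"
proof (rule ccontr)
  let ?S = "{U \<in> Q. f U \<noteq> 0}"
  assume A: "\<not> (finite ?S \<and> card ?S \<le> b + 1)"
  have "\<exists>F. finite F \<and> card F = b + 2 \<and> F \<subseteq> ?S"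
  proof (cases "finite ?S")
    case True
    then have "b + 2 \<le> card ?S" using A by simp
    then obtain T where "T \<subseteq> ?S" "card T = b + 2" "finite T" by (rule obtain_subset_with_card_n)
    then show ?thesis by blast
  next
    case False
    then show ?thesis by (rule infinite_arbitrarily_large)
  qed
  then obtain F where F: "finite F" "card F = b + 2" "F \<subseteq> ?S" by blast
  have "F \<subseteq> Q" using F(3) by blast
  then have e: "\<Inter>F = {}" using Q F(1,2) by blast
  have nz: "\<And>U. U \<in> F \<Longrightarrow> f U \<noteq> 0" using F(3) by blast
  obtain x where "x \<in> topspace X" "\<forall>U\<in>F. x \<in> U" using Cl_fip[OF f F(1) nz] by blast
  then have "x \<in> \<Inter>F" by blast
  then show False using e by simp
qed

end

lemma main_strong:
  fixes X :: "'a topology" and P :: "'a set set"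
  assumes t0: "t0_space X" and cl: "clopen_family X P" and sp: "sigma_strongly_point_finite P"
    and sb: "subbase_of (P \<union> {topspace X - U | U. U \<in> P}) X"
  shows "\<exists>(K :: ('a set \<Rightarrow> real) topology) e.
          eberlein_compact TYPE('a set \<Rightarrow> real) K \<and> K dim_le 0 \<and> embedding_map X K e"
proof -
  obtain Ps :: "nat \<Rightarrow> 'a set set" where Ps: "P = (\<Union>n. Ps n)" "\<And>n. strongly_point_finite (Ps n)"
    using sp unfolding sigma_strongly_point_finite_def by blast
  define nU where "nU U = (LEAST n. U \<in> Ps n)" for U
  have nU: "U \<in> Ps (nU U)" if "U \<in> P" for U
    using that unfolding Ps(1) nU_def by (auto intro: LeastI)
  define w where "w U = 1 / (real (nU U) + 1)" for U
  have wpos: "\<And>U. U \<in> P \<Longrightarrow> w U > 0" by (simp add: w_def)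
  interpret E: emb X P w by unfold_locales (use t0 cl sb wpos in auto)
  have w1: "w U \<le> 1" for U by (simp add: w_def)
  have vals: "0 \<le> f U \<and> f U \<le> 1" if "f \<in> E.Cl" for f U
  proof -
    have "0 \<le> f U \<and> f U \<le> (if U \<in> P then w U else 0)" by (rule E.Cl_vals2[OF that])
    then show ?thesis using w1[of U] by (cases "U \<in> P") auto
  qed
  have Cc0: "E.Cl \<subseteq> c0"
  proof
    fix f assume f: "f \<in> E.Cl"
    show "f \<in> c0"
      unfolding c0_def
    proof (intro CollectI allI impI)
      fix \<epsilon> :: real assume \<epsilon>: "\<epsilon> > 0"
      define N where "N = nat \<lceil>1 / \<epsilon>\<rceil>"
      have "{U. \<epsilon> \<le> \<bar>f U\<bar>} \<subseteq> (\<Union>n\<le>N. {U \<in> Ps n. f U \<noteq> 0})"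
      proof
        fix U assume "U \<in> {U. \<epsilon> \<le> \<bar>f U\<bar>}"
        then have fU: "\<epsilon> \<le> \<bar>f U\<bar>" by simp
        then have "f U \<noteq> 0" using \<epsilon> by auto
        then have U: "U \<in> P" "f U = w U" using E.Cl_vals[OF f] by auto
        then have "\<epsilon> \<le> 1 / (real (nU U) + 1)" using fU by (simp add: w_def)
        then have "\<epsilon> * (real (nU U) + 1) \<le> 1" using \<epsilon> by (simp add: field_simps)
        then have "real (nU U) + 1 \<le> 1 / \<epsilon>" using \<epsilon> by (simp add: field_simps)
        then have "nU U \<le> N" unfolding N_def by linarith
        then show "U \<in> (\<Union>n\<le>N. {U \<in> Ps n. f U \<noteq> 0})"
          using nU[OF U(1)] \<open>f U \<noteq> 0\<close> by blast
      qed
      moreover have "finite (\<Union>n\<le>N. {U \<in> Ps n. f U \<noteq> 0})"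
        using E.fin_strong[OF Ps(2) f] by blast
      ultimately show "finite {U. \<epsilon> \<le> \<bar>f U\<bar>}" by (rule finite_subset)
    qed
  qed
  have W: "compactin (weak_topology_on c0 (\<lambda>x y i. x i + y i) (\<lambda>a x i. a * x i) supn) E.Cl \<and>
       homeomorphic_map (top_of_set E.Cl)
         (subtopology (weak_topology_on c0 (\<lambda>x y i. x i + y i) (\<lambda>a x i. a * x i) supn) E.Cl) id"
  proof (rule weak_lemma[OF Cc0 E.Cl_compact])
    show "\<And>i x. x \<in> c0 \<Longrightarrow> \<bar>x i\<bar> \<le> supn x" by (rule supn_upper)
    show "\<And>x y. x \<in> c0 \<Longrightarrow> y \<in> c0 \<Longrightarrow> (\<lambda>i. x i + y i) \<in> c0" by (rule c0_add)
    fix \<phi> :: "('a set \<Rightarrow> real) \<Rightarrow> real" assume "bounded_linear_functional_on c0 (\<lambda>x y i. x i + y i) (\<lambda>a x i. a * x i) supn \<phi>"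
    then show "continuous_on E.Cl \<phi>"
    proof (rule c0_cont[OF _ Cc0])
      fix x i assume "x \<in> E.Cl" then show "\<bar>x i\<bar> \<le> 1" using vals by force
    qed
  qed
  have eb: "eberlein_compact TYPE('a set \<Rightarrow> real) (top_of_set E.Cl)"
    unfolding eberlein_compact_def
  proof (intro conjI exI)
    show "compact_space (top_of_set E.Cl)"
      using E.Cl_compact by (simp add: compact_space_subtopology compactin_euclidean_iff)
    show "Hausdorff_space (top_of_set E.Cl)" by (rule E.Cl_Hausdorff)
    show "banach_space_on c0 (\<lambda>x y i. x i + y i) (\<lambda>a x i. a * x i) (\<lambda>i. 0) supn" by (rule c0_banach)
    show "E.Cl \<subseteq> c0" by (rule Cc0)
    show "compactin (weak_topology_on c0 (\<lambda>x y i. x i + y i) (\<lambda>a x i. a * x i) supn) E.Cl"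
      using W by blast
    show "homeomorphic_map (top_of_set E.Cl)
         (subtopology (weak_topology_on c0 (\<lambda>x y i. x i + y i) (\<lambda>a x i. a * x i) supn) E.Cl) id"
      using W by blast
  qed
  show ?thesis
    by (intro exI[of _ "top_of_set E.Cl"] exI[of _ E.e] conjI eb E.Cl_dim E.e_embedding)
qed

lemma geom_le2: "finite (N :: nat set) \<Longrightarrow> (\<Sum>n\<in>N. (1/2::real)^n) \<le> 2"
proof -
  assume N: "finite N"
  have "(\<Sum>n\<in>N. (1/2::real)^n) \<le> (\<Sum>n. (1/2::real)^n)"
    by (rule sum_le_suminf) (auto simp: N summable_geometric)
  also have "\<dots> = 2" by (simp add: suminf_geometric)
  finally show ?thesis .
qed

lemma main_bounded:
  fixes X :: "'a topology" and P :: "'a set set"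
  assumes t0: "t0_space X" and cl: "clopen_family X P" and sp: "sigma_boundedly_point_finite P"
    and sb: "subbase_of (P \<union> {topspace X - U | U. U \<in> P}) X"
  shows "\<exists>(K :: ('a set \<Rightarrow> real) topology) e.
          uniform_eberlein_compact TYPE('a set \<Rightarrow> real) K \<and> K dim_le 0 \<and> embedding_map X K e"
proof -
  obtain Ps :: "nat \<Rightarrow> 'a set set" where Ps: "P = (\<Union>n. Ps n)" "\<And>n. boundedly_point_finite (Ps n)"
    using sp unfolding sigma_boundedly_point_finite_def by blast
  have "\<forall>n. \<exists>b::nat. \<forall>F. F \<subseteq> Ps n \<and> finite F \<and> card F = b + 2 \<longrightarrow> \<Inter>F = {}"
    using Ps(2) unfolding boundedly_point_finite_def by blast
  then obtain b :: "nat \<Rightarrow> nat" where b: "\<And>n F. F \<subseteq> Ps n \<Longrightarrow> finite F \<Longrightarrow> card F = b n + 2 \<Longrightarrow> \<Inter>F = {}"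
    by metis
  define nU where "nU U = (LEAST n. U \<in> Ps n)" for U
  have nU: "U \<in> Ps (nU U)" if "U \<in> P" for U
    using that unfolding Ps(1) nU_def by (auto intro: LeastI)
  define w where "w U = 1 / (2 ^ (nU U) * (real (b (nU U)) + 1))" for U
  have wpos: "\<And>U. U \<in> P \<Longrightarrow> w U > 0" by (simp add: w_def)
  have w1: "w U \<le> 1" for U
  proof -
    have "(1::real) * 1 \<le> 2 ^ (nU U) * (real (b (nU U)) + 1)"
      by (rule mult_mono) auto
    then show ?thesis by (simp add: w_def)
  qed
  interpret E: emb X P w by unfold_locales (use t0 cl sb wpos in auto)
  have vals: "0 \<le> f U \<and> f U \<le> 1" if "f \<in> E.Cl" for f U
  proof -
    have "0 \<le> f U \<and> f U \<le> (if U \<in> P then w U else 0)" by (rule E.Cl_vals2[OF that])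
    then show ?thesis using w1[of U] by (cases "U \<in> P") auto
  qed
  have bnd: "(\<Sum>U\<in>G. (f U)^2) \<le> 2" if f: "f \<in> E.Cl" and G: "finite G" for f G
  proof -
    define G' where "G' = {U \<in> G. f U \<noteq> 0}"
    have G'f: "finite G'" using G by (simp add: G'_def)
    have "(\<Sum>U\<in>G. (f U)^2) \<le> (\<Sum>U\<in>G. f U)"
    proof (rule sum_mono)
      fix U have "0 \<le> f U" "f U \<le> 1" using vals[OF f, of U] by auto
      then have "f U * f U \<le> f U" by (intro mult_left_le)
      then show "(f U)^2 \<le> f U" by (simp add: power2_eq_square)
    qed
    also have "(\<Sum>U\<in>G. f U) = (\<Sum>U\<in>G'. f U)"
      unfolding G'_def by (rule sum.mono_neutral_right) (use G in auto)
    also have "\<dots> = (\<Sum>n\<in>nU ` G'. \<Sum>U\<in>{U \<in> G'. nU U = n}. f U)"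
      by (rule sum.image_gen[OF G'f])
    also have "\<dots> \<le> (\<Sum>n\<in>nU ` G'. (1/2::real)^n)"
    proof (rule sum_mono)
      fix n assume "n \<in> nU ` G'"
      have sub: "{U \<in> G'. nU U = n} \<subseteq> {U \<in> Ps n. f U \<noteq> 0}"
      proof
        fix U assume "U \<in> {U \<in> G'. nU U = n}"
        then have "f U \<noteq> 0" "nU U = n" by (auto simp: G'_def)
        moreover then have "U \<in> P" using E.Cl_vals[OF f] by blast
        ultimately show "U \<in> {U \<in> Ps n. f U \<noteq> 0}" using nU by blast
      qed
      have fb: "finite {U \<in> Ps n. f U \<noteq> 0} \<and> card {U \<in> Ps n. f U \<noteq> 0} \<le> b n + 1"
        by (rule E.fin_bounded[OF b f])
      have cardle: "card {U \<in> G'. nU U = n} \<le> b n + 1"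
        using card_mono[OF conjunct1[OF fb] sub] fb by linarith
      have "(\<Sum>U\<in>{U \<in> G'. nU U = n}. f U) = (\<Sum>U\<in>{U \<in> G'. nU U = n}. 1 / (2 ^ n * (real (b n) + 1)))"
      proof (rule sum.cong[OF refl])
        fix U assume "U \<in> {U \<in> G'. nU U = n}"
        then have "f U \<noteq> 0" "nU U = n" by (auto simp: G'_def)
        then have "f U = w U" using E.Cl_vals[OF f] by blast
        then show "f U = 1 / (2 ^ n * (real (b n) + 1))" using \<open>nU U = n\<close> by (simp add: w_def)
      qed
      also have "\<dots> = real (card {U \<in> G'. nU U = n}) / (2 ^ n * (real (b n) + 1))" by simp
      also have "\<dots> \<le> (real (b n) + 1) / (2 ^ n * (real (b n) + 1))"
        using cardle by (intro divide_right_mono) auto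
      also have "\<dots> = (1/2)^n" by (simp add: power_one_over)
      finally show "(\<Sum>U\<in>{U \<in> G'. nU U = n}. f U) \<le> (1/2)^n" .
    qed
    also have "\<dots> \<le> 2" by (rule geom_le2) (simp add: G'f)
    finally show ?thesis .
  qed
  have Cl2: "E.Cl \<subseteq> l2"
  proof
    fix f assume f: "f \<in> E.Cl"
    have "(\<lambda>U. (f U)^2) summable_on UNIV"
      by (rule nonneg_bdd_above_summable_on) (use bnd[OF f] in \<open>auto intro!: bdd_aboveI2\<close>)
    then show "f \<in> l2" by (simp add: l2_def)
  qed
  have R: "inn f f \<le> 2" if f: "f \<in> E.Cl" for f
  proof -
    have "(\<lambda>U. f U * f U) summable_on UNIV" using Cl2 f l2_prod by blast
    then show ?thesis unfolding inn_def
      by (rule infsum_le_finite_sums) (use bnd[OF f] in \<open>auto simp: power2_eq_square\<close>)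
  qed
  have W: "compactin (weak_topology_on l2 (\<lambda>x y i. x i + y i) (\<lambda>a x i. a * x i) (\<lambda>x. sqrt (inn x x))) E.Cl \<and>
       homeomorphic_map (top_of_set E.Cl)
         (subtopology (weak_topology_on l2 (\<lambda>x y i. x i + y i) (\<lambda>a x i. a * x i) (\<lambda>x. sqrt (inn x x))) E.Cl) id"
  proof (rule weak_lemma[OF Cl2 E.Cl_compact])
    show "\<And>i x. x \<in> l2 \<Longrightarrow> \<bar>x i\<bar> \<le> sqrt (inn x x)" by (rule l2_coord_abs)
    show "\<And>x y. x \<in> l2 \<Longrightarrow> y \<in> l2 \<Longrightarrow> (\<lambda>i. x i + y i) \<in> l2" by (rule l2_add)
    fix \<phi> :: "('a set \<Rightarrow> real) \<Rightarrow> real"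
    assume "bounded_linear_functional_on l2 (\<lambda>x y i. x i + y i) (\<lambda>a x i. a * x i) (\<lambda>x. sqrt (inn x x)) \<phi>"
    then show "continuous_on E.Cl \<phi>"
      by (rule l2_cont[OF _ Cl2 R])
  qed
  have eb: "uniform_eberlein_compact TYPE('a set \<Rightarrow> real) (top_of_set E.Cl)"
    unfolding uniform_eberlein_compact_def
  proof (intro conjI exI)
    show "compact_space (top_of_set E.Cl)"
      using E.Cl_compact by (simp add: compact_space_subtopology compactin_euclidean_iff)
    show "Hausdorff_space (top_of_set E.Cl)" by (rule E.Cl_Hausdorff)
    show "hilbert_space_on l2 (\<lambda>x y i. x i + y i) (\<lambda>a x i. a * x i) (\<lambda>i. 0) inn" by (rule l2_hilbert)
    show "E.Cl \<subseteq> l2" by (rule Cl2)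
    show "compactin (weak_topology_on l2 (\<lambda>x y i. x i + y i) (\<lambda>a x i. a * x i) (\<lambda>x. sqrt (inn x x))) E.Cl"
      using W by blast
    show "homeomorphic_map (top_of_set E.Cl)
         (subtopology (weak_topology_on l2 (\<lambda>x y i. x i + y i) (\<lambda>a x i. a * x i) (\<lambda>x. sqrt (inn x x))) E.Cl) id"
      using W by blast
  qed
  show ?thesis
    by (intro exI[of _ "top_of_set E.Cl"] exI[of _ E.e] conjI eb E.Cl_dim E.e_embedding)
qed

lemma base_subbase:
  assumes cl: "clopen_family X B" and bs: "base_of B X"
  shows "subbase_of (B \<union> {topspace X - U | U. U \<in> B}) X"
proof -
  let ?S = "B \<union> {topspace X - U | U. U \<in> B}"
  have Bo: "\<And>U. U \<in> B \<Longrightarrow> openin X U" and Bc: "\<And>U. U \<in> B \<Longrightarrow> closedin X U"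
    using cl by (auto simp: clopen_family_def)
  have So: "openin X s" if "s \<in> ?S" for s
    using that Bo Bc by (auto simp: openin_diff)
  have Spow: "?S \<subseteq> Pow (topspace X)" using Bo by (auto dest: openin_subset)
  have eqB: "openin X = arbitrary union_of (\<lambda>U. U \<in> B)" using bs by (simp add: base_of_def)
  have "openin X W = (arbitrary union_of (finite intersection_of (\<lambda>U. U \<in> ?S) relative_to topspace X)) W" for W
  proof
    assume "openin X W"
    then obtain \<U> where U: "\<U> \<subseteq> Collect (\<lambda>U. U \<in> B)" "\<Union>\<U> = W"
      unfolding eqB union_of_def by blast
    have "\<U> \<subseteq> Collect (finite intersection_of (\<lambda>U. U \<in> ?S) relative_to topspace X)"
    proof
      fix U assume "U \<in> \<U>"
      then have UB: "U \<in> B" using U(1) by blast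
      have "(finite intersection_of (\<lambda>U. U \<in> ?S)) U"
        unfolding intersection_of_def using UB by (intro exI[of _ "{U}"]) auto
      moreover have "topspace X \<inter> U = U" using openin_subset[OF Bo[OF UB]] by blast
      ultimately show "U \<in> Collect (finite intersection_of (\<lambda>U. U \<in> ?S) relative_to topspace X)"
        unfolding relative_to_def by blast
    qed
    then show "(arbitrary union_of (finite intersection_of (\<lambda>U. U \<in> ?S) relative_to topspace X)) W"
      unfolding union_of_def arbitrary_def using U(2) by blast
  next
    assume "(arbitrary union_of (finite intersection_of (\<lambda>U. U \<in> ?S) relative_to topspace X)) W"
    then obtain \<U> where U: "\<U> \<subseteq> Collect (finite intersection_of (\<lambda>U. U \<in> ?S) relative_to topspace X)"
      "\<Union>\<U> = W" unfolding union_of_def by blast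
    have "openin X V" if "V \<in> \<U>" for V
    proof -
      have "(finite intersection_of (\<lambda>U. U \<in> ?S) relative_to topspace X) V" using that U(1) by blast
      then obtain S' where S': "(finite intersection_of (\<lambda>U. U \<in> ?S)) S'" "topspace X \<inter> S' = V"
        unfolding relative_to_def by blast
      then obtain F where F: "finite F" "F \<subseteq> ?S" "\<Inter>F = S'" unfolding intersection_of_def by auto
      show ?thesis
      proof (cases "F = {}")
        case True then show ?thesis using S' F by auto
      next
        case False
        have "openin X (\<Inter>F)" using F(1,2) False So by (intro openin_Inter) auto
        then have "openin X (topspace X \<inter> \<Inter>F)" by (intro openin_Int) auto
        then show ?thesis using S' F by simp
      qed
    qed
    then show "openin X W" using U(2) by blast
  qed
  then show ?thesis unfolding subbase_of_def using Spow by blast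
qed

lemma disjoint_bounded: "sigma_disjoint P \<Longrightarrow> sigma_boundedly_point_finite P"
proof -
  assume "sigma_disjoint P"
  then obtain Ps :: "nat \<Rightarrow> 'a set set" where Ps: "P = (\<Union>n. Ps n)" "\<And>n. pairwise disjnt (Ps n)"
    unfolding sigma_disjoint_def by blast
  have "boundedly_point_finite (Ps n)" for n
    unfolding boundedly_point_finite_def
  proof (intro exI[of _ 0] allI impI)
    fix F assume F: "F \<subseteq> Ps n \<and> finite F \<and> card F = 0 + 2"
    then have "card F = 2" by simp
    then obtain A B where AB: "F = {A, B}" "A \<noteq> B" unfolding card_2_iff by blast
    have "A \<in> Ps n" "B \<in> Ps n" using F AB(1) by auto
    then have "disjnt A B" using Ps(2)[of n] AB(2) unfolding pairwise_def by blast
    then show "\<Inter>F = {}" using AB by (simp add: disjnt_def)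
  qed
  then show ?thesis unfolding sigma_boundedly_point_finite_def using Ps(1) by blast
qed

theorem theorem5p4:
  shows
  "(\<forall>(X :: 'a topology) \<P>. t0_space X \<and> clopen_family X \<P> \<and>
       sigma_strongly_point_finite \<P> \<and>
       subbase_of (\<P> \<union> {topspace X - U | U. U \<in> \<P>}) X \<longrightarrow>
       (\<exists>(K :: ('a set \<Rightarrow> real) topology) e.
          eberlein_compact TYPE('a set \<Rightarrow> real) K \<and> K dim_le 0 \<and> embedding_map X K e))
   \<and>
   (\<forall>(X :: 'a topology) \<P>. t0_space X \<and> clopen_family X \<P> \<and>
       sigma_boundedly_point_finite \<P> \<and>
       subbase_of (\<P> \<union> {topspace X - U | U. U \<in> \<P>}) X \<longrightarrow>
       (\<exists>(K :: ('a set \<Rightarrow> real) topology) e.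
          uniform_eberlein_compact TYPE('a set \<Rightarrow> real) K \<and> K dim_le 0 \<and> embedding_map X K e))
   \<and>
   (\<forall>(X :: 'a topology) \<B>. t0_space X \<and> clopen_family X \<B> \<and>
       sigma_strongly_point_finite \<B> \<and> base_of \<B> X \<longrightarrow>
       (\<exists>(K :: ('a set \<Rightarrow> real) topology) e.
          eberlein_compact TYPE('a set \<Rightarrow> real) K \<and> K dim_le 0 \<and> embedding_map X K e))
   \<and>
   (\<forall>(X :: 'a topology) \<B>. t0_space X \<and> clopen_family X \<B> \<and>
       (sigma_boundedly_point_finite \<B> \<or> sigma_disjoint \<B>) \<and> base_of \<B> X \<longrightarrow>
       (\<exists>(K :: ('a set \<Rightarrow> real) topology) e.
          uniform_eberlein_compact TYPE('a set \<Rightarrow> real) K \<and> K dim_le 0 \<and> embedding_map X K e))"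
proof (intro conjI allI impI)
  fix X :: "'a topology" and P
  assume h: "t0_space X \<and> clopen_family X P \<and> sigma_strongly_point_finite P \<and>
       subbase_of (P \<union> {topspace X - U | U. U \<in> P}) X"
  show "\<exists>(K :: ('a set \<Rightarrow> real) topology) e.
          eberlein_compact TYPE('a set \<Rightarrow> real) K \<and> K dim_le 0 \<and> embedding_map X K e"
    by (rule main_strong) (use h in auto)
next
  fix X :: "'a topology" and P
  assume h: "t0_space X \<and> clopen_family X P \<and> sigma_boundedly_point_finite P \<and>
       subbase_of (P \<union> {topspace X - U | U. U \<in> P}) X"
  show "\<exists>(K :: ('a set \<Rightarrow> real) topology) e.
          uniform_eberlein_compact TYPE('a set \<Rightarrow> real) K \<and> K dim_le 0 \<and> embedding_map X K e"
    by (rule main_bounded) (use h in auto)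
next
  fix X :: "'a topology" and B
  assume h: "t0_space X \<and> clopen_family X B \<and> sigma_strongly_point_finite B \<and> base_of B X"
  have sb: "subbase_of (B \<union> {topspace X - U | U. U \<in> B}) X"
    by (rule base_subbase) (use h in auto)
  show "\<exists>(K :: ('a set \<Rightarrow> real) topology) e.
          eberlein_compact TYPE('a set \<Rightarrow> real) K \<and> K dim_le 0 \<and> embedding_map X K e"
    by (rule main_strong[OF _ _ _ sb]) (use h in auto)
next
  fix X :: "'a topology" and B
  assume h: "t0_space X \<and> clopen_family X B \<and>
       (sigma_boundedly_point_finite B \<or> sigma_disjoint B) \<and> base_of B X"
  have sb: "subbase_of (B \<union> {topspace X - U | U. U \<in> B}) X"
    by (rule base_subbase) (use h in auto)
  have bp: "sigma_boundedly_point_finite B" using h disjoint_bounded by blast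
  show "\<exists>(K :: ('a set \<Rightarrow> real) topology) e.
          uniform_eberlein_compact TYPE('a set \<Rightarrow> real) K \<and> K dim_le 0 \<and> embedding_map X K e"
    by (rule main_bounded[OF _ _ bp sb]) (use h in auto)
qed

end
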